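(* Let $e^{it\Delta}$ denote the free Schr\"odinger propagator on $\mathbb{R}^2$. There is no constant $C$ such that for all Schwartz functions $F$ on $\mathbb{R}\times\mathbb{R}^2$ with $F(s,\cdot)$ radial for each $s$, $$\Big(\int_{\mathbb{R}}\Big\|\int_{s<t}e^{i(t-s)\Delta}F(s)\,ds\Big\|_{L^\infty(\mathbb{R}^2)}^2dt\Big)^{1/2}\le C\Big(\int_{\mathbb{R}}\|F(s)\|_{L^1(\mathbb{R}^2)}^2ds\Big)^{1/2}.$$
   Context: $u(t)=e^{it\Delta}f$ solves $i\partial_tu+\Delta u=0$, $u(0)=f$; $F(s)=F(s,\cdot)$. *)

theory Defs
  imports "HOL-Probability.Probability"
begin

text \<open>Schwartz functions on a Euclidean space: the largest class of functions that are
  (Frechet) differentiable, rapidly decreasing, and whose partial derivatives along every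
  basis direction are again in the class.  Equivalently: smooth functions all of whose
  derivatives decay faster than any power.\<close>
coinductive schwartz :: "('a::euclidean_space \<Rightarrow> complex) \<Rightarrow> bool" where
  "\<lbrakk> \<And>z. (g has_derivative g' z) (at z);
     \<And>N::nat. \<exists>C. \<forall>z. (1 + norm z) ^ N * cmod (g z) \<le> C;
     \<And>b. b \<in> Basis \<Longrightarrow> schwartz (\<lambda>z. g' z b) \<rbrakk> \<Longrightarrow> schwartz g"

definition schrod_prop :: "real \<Rightarrow> (real^2 \<Rightarrow> complex) \<Rightarrow> real^2 \<Rightarrow> complex" where
  "schrod_prop t f x =
     (if t = 0 then f x
      else (1 / (4 * complex_of_real pi * \<i> * complex_of_real t)) *
           (LINT y|lborel. exp (\<i> * complex_of_real ((norm (x - y))\<^sup>2 / (4 * t))) * f y))"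

definition duhamel :: "(real \<Rightarrow> real^2 \<Rightarrow> complex) \<Rightarrow> real \<Rightarrow> real^2 \<Rightarrow> complex" where
  "duhamel F t x = (LINT s:{..<t}|lborel. schrod_prop (t - s) (F s) x)"

definition Linf_norm :: "(real^2 \<Rightarrow> complex) \<Rightarrow> ennreal" where
  "Linf_norm g = esssup lborel (\<lambda>x. ennreal (cmod (g x)))"

definition L1_norm :: "(real^2 \<Rightarrow> complex) \<Rightarrow> ennreal" where
  "L1_norm g = (\<integral>\<^sup>+ x. ennreal (cmod (g x)) \<partial>lborel)"

end

theory Submission
  imports Defs
begin

lemma emeasure_lborel2_ball: "emeasure (lborel::(real^2) measure) (ball c r) = ennreal (pi * r^2)" if "r \<ge> 0"
  using emeasure_ball[OF that, of c] by (simp add: eval_unit_ball_vol)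

lemma negsq_set: fixes x :: real shows "{y::real^2. x < - ((norm y)\<^sup>2)} = (if x < 0 then ball 0 (sqrt (-x)) else {})"
proof (cases "x < 0")
  case True
  have *: "x < - (norm y)\<^sup>2 \<longleftrightarrow> norm y < sqrt (-x)" for y::"real^2"
  proof -
    have e: "norm y = sqrt ((norm y)\<^sup>2)" by simp
    have "norm y < sqrt (-x) \<longleftrightarrow> (norm y)\<^sup>2 < -x" by (subst e) (rule real_sqrt_less_iff)
    then show ?thesis by linarith
  qed
  show ?thesis
  proof (rule set_eqI)
    fix y :: "real^2"
    show "y \<in> {y. x < - (norm y)\<^sup>2} \<longleftrightarrow> y \<in> (if x < 0 then ball 0 (sqrt (- x)) else {})"
      unfolding mem_Collect_eq if_P[OF True] mem_ball dist_0_norm by (rule *)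
  qed
next
  case False
  have "\<not> x < - (norm y)\<^sup>2" for y::"real^2" using False zero_le_power2[of "norm y"] by linarith
  then show ?thesis using False by simp
qed

lemma distr_negsq: "distr (lborel::(real^2) measure) borel (\<lambda>y. - (norm y)\<^sup>2)
   = density lborel (\<lambda>u. ennreal pi * indicator {..<0} u)"
proof (rule measure_eqI_lessThan)
  fix x :: real
  have e: "emeasure (distr (lborel::(real^2) measure) borel (\<lambda>y. - (norm y)\<^sup>2)) {x<..}
     = ennreal (if x < 0 then pi * (-x) else 0)"
    apply (subst emeasure_distr)
      apply (simp_all add: vimage_def)
    using negsq_set[of x] emeasure_lborel2_ball[of "sqrt (-x)" 0]
    by (simp add: Int_def)
  then show "emeasure (distr (lborel::(real^2) measure) borel (\<lambda>y. - (norm y)\<^sup>2)) {x<..} < \<infinity>" by simp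
  have "emeasure (density lborel (\<lambda>u. ennreal pi * indicator {..<0} u)) {x<..}
     = (\<integral>\<^sup>+ u. ennreal pi * indicator ({x<..<0}) u \<partial>lborel)"
    by (subst emeasure_density) (auto intro!: nn_integral_cong split: split_indicator)
  also have "\<dots> = ennreal pi * emeasure lborel {x<..<0}"
    by (subst nn_integral_cmult_indicator) auto
  also have "\<dots> = ennreal (if x < 0 then pi * (-x) else 0)"
    by (auto simp: ennreal_mult[symmetric])
  finally show "emeasure (distr (lborel::(real^2) measure) borel (\<lambda>y. - (norm y)\<^sup>2)) {x<..} =
         emeasure (density lborel (\<lambda>u. ennreal pi * indicator {..<0} u)) {x<..}" using e by simp
qed auto

lemma nn_integral_radial:
  fixes g :: "real \<Rightarrow> ennreal" assumes [measurable]: "g \<in> borel_measurable borel"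
  shows "(\<integral>\<^sup>+ y. g (- (norm (y::real^2))\<^sup>2) \<partial>lborel) = ennreal pi * (\<integral>\<^sup>+ u. g u * indicator {..<0} u \<partial>lborel)"
proof -
  have "(\<integral>\<^sup>+ y. g (- (norm (y::real^2))\<^sup>2) \<partial>lborel) = (\<integral>\<^sup>+ u. g u \<partial>distr (lborel::(real^2) measure) borel (\<lambda>y. - (norm y)\<^sup>2))"
    by (subst nn_integral_distr) auto
  also have "\<dots> = (\<integral>\<^sup>+ u. ennreal pi * indicator {..<0} u * g u \<partial>lborel)"
    unfolding distr_negsq by (subst nn_integral_density) auto
  also have "\<dots> = ennreal pi * (\<integral>\<^sup>+ u. g u * indicator {..<0} u \<partial>lborel)"
    by (subst nn_integral_cmult[symmetric]) (auto simp: mult_ac)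
  finally show ?thesis .
qed

lemma radial_integrable_iff:
  fixes g :: "real \<Rightarrow> complex" assumes [measurable]: "g \<in> borel_measurable borel"
  shows "integrable lborel (\<lambda>y. g (- (norm (y::real^2))\<^sup>2)) \<longleftrightarrow> set_integrable lborel {..<0} g"
proof -
  have "integrable lborel (\<lambda>y. g (- (norm (y::real^2))\<^sup>2)) \<longleftrightarrow> integrable (distr (lborel::(real^2) measure) borel (\<lambda>y. - (norm y)\<^sup>2)) g"
    by (subst integrable_distr_eq) auto
  also have "\<dots> \<longleftrightarrow> integrable lborel (\<lambda>u. (pi * indicator {..<0} u) *\<^sub>R g u)"
    unfolding distr_negsq
    by (subst integrable_density[symmetric]) (auto simp: ennreal_mult ennreal_indicator)
  also have "\<dots> \<longleftrightarrow> integrable lborel (\<lambda>u. indicator {..<0} u *\<^sub>R g u)"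
  proof
    assume "integrable lborel (\<lambda>u. (pi * indicator {..<0} u) *\<^sub>R g u)"
    then have i: "integrable lborel (\<lambda>u. (1/pi) *\<^sub>R ((pi * indicator {..<0} u) *\<^sub>R g u))" by (rule integrable_scaleR_right)
    have e: "(\<lambda>u. (1/pi) *\<^sub>R ((pi * indicator {..<0} u) *\<^sub>R g u)) = (\<lambda>u. indicator {..<0} u *\<^sub>R g u)"
      by (auto simp: fun_eq_iff)
    from i show "integrable lborel (\<lambda>u. indicator {..<0} u *\<^sub>R g u)" unfolding e .
  next
    assume "integrable lborel (\<lambda>u. indicator {..<0} u *\<^sub>R g u)"
    then have i: "integrable lborel (\<lambda>u. pi *\<^sub>R (indicator {..<0} u *\<^sub>R g u))" by (rule integrable_scaleR_right)
    have e: "(\<lambda>u. pi *\<^sub>R (indicator {..<0} u *\<^sub>R g u)) = (\<lambda>u. (pi * indicator {..<0} u) *\<^sub>R g u)"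
      by (auto simp: fun_eq_iff)
    from i show "integrable lborel (\<lambda>u. (pi * indicator {..<0} u) *\<^sub>R g u)" unfolding e .
  qed
  finally show ?thesis unfolding set_integrable_def .
qed

lemma radial_integral:
  fixes g :: "real \<Rightarrow> complex" assumes [measurable]: "g \<in> borel_measurable borel"
  shows "(LINT y|lborel. g (- (norm (y::real^2))\<^sup>2)) = pi * (LINT u:{..<0}|lborel. g u)"
proof -
  have "(LINT y|lborel. g (- (norm (y::real^2))\<^sup>2)) = integral\<^sup>L (distr (lborel::(real^2) measure) borel (\<lambda>y. - (norm y)\<^sup>2)) g"
    by (subst integral_distr) auto
  also have "\<dots> = (LINT u|lborel. (pi * indicator {..<0} u) *\<^sub>R g u)"
    unfolding distr_negsq
    by (subst integral_density[symmetric]) (auto simp: ennreal_mult ennreal_indicator)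
  also have "\<dots> = pi * (LINT u:{..<0}|lborel. g u)"
    unfolding set_lebesgue_integral_def by (simp add: scaleR_conv_of_real mult.assoc)
  finally show ?thesis .
qed


lemma halfline_exp_real:
  fixes a :: real assumes a: "a > 0"
  shows "set_integrable lborel {..<0} (\<lambda>u. exp (a * u))"
proof -
  have [simp]: "a \<noteq> 0" using a by simp
  have "set_integrable lborel (einterval (-\<infinity>) (ereal 0)) (\<lambda>u. exp (a * u))"
  proof (rule interval_integral_FTC_nonneg(1))
    let ?F = "\<lambda>u. exp (a * u) / a"
    show "(?F has_real_derivative exp (a * x)) (at x)" for x
      using a by (auto intro!: derivative_eq_intros simp: field_simps)
    show "((?F \<circ> real_of_ereal) \<longlongrightarrow> 1/a) (at_left (ereal 0))"
      using a by (auto simp: zero_ereal_def ereal_tendsto_simps intro!: tendsto_eq_intros)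
    have *: "((\<lambda>t. exp (a * t)) \<longlongrightarrow> 0) at_bot"
      using a
      by (auto intro!: exp_at_bot[THEN filterlim_compose] filterlim_tendsto_pos_mult_at_bot filterlim_ident)
    show "((?F \<circ> real_of_ereal) \<longlongrightarrow> 0) (at_right (-\<infinity>))"
      unfolding ereal_tendsto_simps
      by (intro filterlim_compose[OF _ *]) (auto intro!: tendsto_eq_intros filterlim_ident)
  qed (auto intro!: continuous_intros)
  then show ?thesis by simp
qed

lemma halfline_exp:
  fixes a :: complex assumes a: "Re a > 0"
  shows "set_integrable lborel {..<0} (\<lambda>u. exp (a * complex_of_real u))"
    and "(LINT u:{..<0}|lborel. exp (a * complex_of_real u)) = 1/a"
proof -
  show i: "set_integrable lborel {..<0} (\<lambda>u. exp (a * complex_of_real u))"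
  proof (rule set_integrable_bound[OF halfline_exp_real[OF a]])
    show "set_borel_measurable lborel {..<0} (\<lambda>u. exp (a * complex_of_real u))"
      unfolding set_borel_measurable_def by measurable
    show "AE x in lborel. x \<in> {..<0} \<longrightarrow> norm (exp (a * complex_of_real x)) \<le> norm (exp (Re a * x))"
      by auto
  qed
  have [simp]: "a \<noteq> 0" using a by auto
  have "(LBINT x=(-\<infinity>)..(ereal 0). exp (a * complex_of_real x)) = 1/a - 0"
  proof (rule interval_integral_FTC_integrable)
    let ?F = "\<lambda>u. exp (a * complex_of_real u) / a"
    show "(?F has_vector_derivative exp (a * complex_of_real x)) (at x)" for x
    proof -
      have "((\<lambda>z. exp (a * z) / a) has_field_derivative exp (a * complex_of_real x)) (at (complex_of_real x))"
        using \<open>a \<noteq> 0\<close> by (auto intro!: derivative_eq_intros)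
      from has_vector_derivative_real_field[OF this] show ?thesis .
    qed
    show "set_integrable lborel (einterval (-\<infinity>) (ereal 0)) (\<lambda>u. exp (a * complex_of_real u))"
      using i by simp
    show "((?F \<circ> real_of_ereal) \<longlongrightarrow> 1/a) (at_left (ereal 0))"
      using \<open>a \<noteq> 0\<close> by (auto simp: zero_ereal_def ereal_tendsto_simps intro!: tendsto_eq_intros)
    have *: "((\<lambda>t. exp (Re a * t)) \<longlongrightarrow> 0) at_bot"
      using a
      by (auto intro!: exp_at_bot[THEN filterlim_compose] filterlim_tendsto_pos_mult_at_bot filterlim_ident)
    have "((\<lambda>t. exp (a * complex_of_real t)) \<longlongrightarrow> 0) at_bot"
      by (rule tendsto_norm_zero_cancel) (use * in simp)
    then have **: "((\<lambda>t. ?F t) \<longlongrightarrow> 0) at_bot"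
      using tendsto_divide[OF _ tendsto_const, of _ 0 at_bot a] by simp
    show "((?F \<circ> real_of_ereal) \<longlongrightarrow> 0) (at_right (-\<infinity>))"
      unfolding ereal_tendsto_simps using ** by simp
  qed (auto intro!: continuous_intros)
  then show "(LINT u:{..<0}|lborel. exp (a * complex_of_real u)) = 1/a"
    by (simp add: interval_lebesgue_integral_def)
qed

lemma gauss2_zero:
  fixes a :: complex assumes a: "Re a > 0"
  shows "integrable lborel (\<lambda>y::real^2. exp (- a * complex_of_real ((norm y)\<^sup>2)))"
    and "(LINT y|lborel. exp (- a * complex_of_real ((norm (y::real^2))\<^sup>2))) = pi / a"
proof -
  have e: "(\<lambda>y::real^2. exp (- a * complex_of_real ((norm y)\<^sup>2))) = (\<lambda>y. (\<lambda>u. exp (a * complex_of_real u)) (- (norm y)\<^sup>2))"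
    by auto
  show "integrable lborel (\<lambda>y::real^2. exp (- a * complex_of_real ((norm y)\<^sup>2)))"
    unfolding e by (subst radial_integrable_iff) (auto intro: halfline_exp[OF a])
  show "(LINT y|lborel. exp (- a * complex_of_real ((norm (y::real^2))\<^sup>2))) = pi / a"
    unfolding e by (subst radial_integral) (auto simp: halfline_exp[OF a])
qed


lemma mvt_ball:
  fixes F F' :: "real \<Rightarrow> complex"
  assumes der: "\<And>t. t \<in> ball t0 r \<Longrightarrow> (F has_vector_derivative F' t) (at t)"
    and bd: "\<And>t. t \<in> ball t0 r \<Longrightarrow> norm (F' t) \<le> B" and t: "t \<in> ball t0 r"
  shows "norm (F t - F t0) \<le> B * \<bar>t - t0\<bar>"
proof -
  have t0: "t0 \<in> ball t0 r" using t by (auto simp: dist_norm)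
  have "norm (F t - F t0) \<le> B * norm (t - t0)"
  proof (rule differentiable_bound[where f' = "\<lambda>t h. h *\<^sub>R F' t"])
    show "convex (ball t0 r)" by simp
    show "(F has_derivative (\<lambda>h. h *\<^sub>R F' x)) (at x within ball t0 r)" if "x \<in> ball t0 r" for x
      using der[OF that] unfolding has_vector_derivative_def by (rule has_derivative_at_withinI)
    show "onorm (\<lambda>h. h *\<^sub>R F' x) \<le> B" if "x \<in> ball t0 r" for x
      using onorm_scaleR_left[OF bounded_linear_ident, of "F' x"] bd[OF that] by (simp add: onorm_id)
  qed (use t t0 in auto)
  then show ?thesis by simp
qed

lemma vector_derivative_from_quotient:
  fixes F :: "real \<Rightarrow> complex"
  assumes "((\<lambda>y. (F y - F x) / complex_of_real (y - x)) \<longlongrightarrow> D) (at x)"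
  shows "(F has_vector_derivative D) (at x)"
proof -
  have "((\<lambda>y. Re ((F y - F x) / complex_of_real (y - x))) \<longlongrightarrow> Re D) (at x)"
    by (rule tendsto_Re[OF assms])
  then have r: "((\<lambda>y. (Re (F y) - Re (F x)) / (y - x)) \<longlongrightarrow> Re D) (at x)" by simp
  have "((\<lambda>y. Im ((F y - F x) / complex_of_real (y - x))) \<longlongrightarrow> Im D) (at x)"
    by (rule tendsto_Im[OF assms])
  then have i: "((\<lambda>y. (Im (F y) - Im (F x)) / (y - x)) \<longlongrightarrow> Im D) (at x)" by simp
  show ?thesis unfolding has_vector_derivative_complex_iff has_field_derivative_iff
    using r i by simp
qed

lemma deriv_under_integral:
  fixes f f' :: "real \<Rightarrow> 'a \<Rightarrow> complex" and M :: "'a measure"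
  assumes r: "r > 0"
    and int: "integrable M (f t0)"
    and meas: "\<And>t. t \<in> ball t0 r \<Longrightarrow> f t \<in> borel_measurable M"
    and der: "\<And>t y. t \<in> ball t0 r \<Longrightarrow> y \<in> space M \<Longrightarrow> ((\<lambda>t. f t y) has_vector_derivative f' t y) (at t)"
    and meas': "f' t0 \<in> borel_measurable M"
    and g: "integrable M g"
    and bound: "\<And>t y. t \<in> ball t0 r \<Longrightarrow> y \<in> space M \<Longrightarrow> norm (f' t y) \<le> g y"
  shows "\<And>t. t \<in> ball t0 r \<Longrightarrow> integrable M (f t)"
    and "((\<lambda>t. LINT y|M. f t y) has_vector_derivative (LINT y|M. f' t0 y)) (at t0)"
proof -
  have diffb: "norm (f t y - f t0 y) \<le> g y * \<bar>t - t0\<bar>" if "t \<in> ball t0 r" "y \<in> space M" for t y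
    by (rule mvt_ball[where F="\<lambda>t. f t y" and F'="\<lambda>t. f' t y" and r=r])
       (use der bound that in auto)
  show intt: "integrable M (f t)" if t: "t \<in> ball t0 r" for t
  proof (rule Bochner_Integration.integrable_bound[where f="\<lambda>y. norm (f t0 y) + g y * \<bar>t - t0\<bar>"])
    show "integrable M (\<lambda>y. norm (f t0 y) + g y * \<bar>t - t0\<bar>)"
      using int g by auto
    show "f t \<in> borel_measurable M" using meas[OF t] .
    show "AE y in M. norm (f t y) \<le> norm (norm (f t0 y) + g y * \<bar>t - t0\<bar>)"
    proof (rule AE_I2)
      fix y assume y: "y \<in> space M"
      have "norm (f t y) \<le> norm (f t0 y) + norm (f t y - f t0 y)" by (rule norm_triangle_sub)
      also have "\<dots> \<le> norm (f t0 y) + g y * \<bar>t - t0\<bar>" using diffb[OF t y] by simp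
      also have "\<dots> \<le> norm (norm (f t0 y) + g y * \<bar>t - t0\<bar>)" by simp
      finally show "norm (f t y) \<le> norm (norm (f t0 y) + g y * \<bar>t - t0\<bar>)" .
    qed
  qed
  have t0in: "t0 \<in> ball t0 r" using r by simp
  show "((\<lambda>t. LINT y|M. f t y) has_vector_derivative (LINT y|M. f' t0 y)) (at t0)"
  proof (rule vector_derivative_from_quotient)
    show "((\<lambda>t. ((LINT y|M. f t y) - (LINT y|M. f t0 y)) / complex_of_real (t - t0)) \<longlongrightarrow> (LINT y|M. f' t0 y)) (at t0)"
      unfolding tendsto_at_iff_sequentially[where s=UNIV]
    proof (intro allI impI)
      fix X :: "nat \<Rightarrow> real" assume X: "\<forall>i. X i \<in> UNIV - {t0}" "X \<longlonglongrightarrow> t0"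
      from X(2) have "eventually (\<lambda>n. X n \<in> ball t0 r) sequentially"
        using r by (rule tendstoD[where e=r, THEN eventually_mono]) (auto simp: dist_commute)
      then obtain N where N: "\<And>n. n \<ge> N \<Longrightarrow> X n \<in> ball t0 r" by (auto simp: eventually_sequentially)
      define Y where "Y n = X (n + N)" for n
      have Y: "Y n \<in> ball t0 r" "Y n \<noteq> t0" for n using N X(1) by (auto simp: Y_def)
      have Ylim: "Y \<longlonglongrightarrow> t0" using X(2) unfolding Y_def by (rule LIMSEQ_ignore_initial_segment)
      have q: "((LINT y|M. f (Y n) y) - (LINT y|M. f t0 y)) / complex_of_real (Y n - t0)
            = (LINT y|M. (f (Y n) y - f t0 y) / complex_of_real (Y n - t0))" for n
        using intt[OF Y(1)] int by simp
      have "(\<lambda>n. LINT y|M. (f (Y n) y - f t0 y) / complex_of_real (Y n - t0)) \<longlonglongrightarrow> (LINT y|M. f' t0 y)"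
      proof (rule integral_dominated_convergence[where w=g])
        show "(\<lambda>y. (f (Y n) y - f t0 y) / complex_of_real (Y n - t0)) \<in> borel_measurable M" for n
          using meas[OF Y(1)] meas[OF t0in] by measurable
        show "f' t0 \<in> borel_measurable M" by (rule meas')
        show "integrable M g" by (rule g)
        show "AE y in M. (\<lambda>n. (f (Y n) y - f t0 y) / complex_of_real (Y n - t0)) \<longlonglongrightarrow> f' t0 y"
        proof (rule AE_I2)
          fix y assume y: "y \<in> space M"
          have "((\<lambda>t. f t y) has_vector_derivative f' t0 y) (at t0)" using der[OF t0in y] .
          then have "((\<lambda>t. Re (f t y)) has_field_derivative Re (f' t0 y)) (at t0)"
            and "((\<lambda>t. Im (f t y)) has_field_derivative Im (f' t0 y)) (at t0)"
            unfolding has_vector_derivative_complex_iff by auto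
          then have lr: "((\<lambda>t. (Re (f t y) - Re (f t0 y)) / (t - t0)) \<longlongrightarrow> Re (f' t0 y)) (at t0)"
            and li: "((\<lambda>t. (Im (f t y) - Im (f t0 y)) / (t - t0)) \<longlongrightarrow> Im (f' t0 y)) (at t0)"
            unfolding has_field_derivative_iff by auto
          have "((\<lambda>t. (f t y - f t0 y) / complex_of_real (t - t0)) \<longlongrightarrow> f' t0 y) (at t0)"
            unfolding tendsto_complex_iff using lr li by simp
          then show "(\<lambda>n. (f (Y n) y - f t0 y) / complex_of_real (Y n - t0)) \<longlonglongrightarrow> f' t0 y"
            unfolding tendsto_at_iff_sequentially[where s=UNIV] using Y Ylim by (auto simp: comp_def)
        qed
        show "AE y in M. norm ((f (Y n) y - f t0 y) / complex_of_real (Y n - t0)) \<le> g y" for n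
        proof (rule AE_I2)
          fix y assume y: "y \<in> space M"
          have "norm (f (Y n) y - f t0 y) \<le> g y * \<bar>Y n - t0\<bar>" by (rule diffb[OF Y(1) y])
          moreover have "\<bar>Y n - t0\<bar> > 0" using Y(2) by simp
          ultimately show "norm ((f (Y n) y - f t0 y) / complex_of_real (Y n - t0)) \<le> g y"
            by (simp add: norm_divide divide_le_eq flip: of_real_diff)
        qed
      qed
      then have "(\<lambda>n. ((LINT y|M. f (Y n) y) - (LINT y|M. f t0 y)) / complex_of_real (Y n - t0)) \<longlonglongrightarrow> (LINT y|M. f' t0 y)"
        unfolding q .
      then show "((\<lambda>t. ((LINT y|M. f t y) - (LINT y|M. f t0 y)) / complex_of_real (t - t0)) \<circ> X) \<longlonglongrightarrow> (LINT y|M. f' t0 y)"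
        unfolding Y_def comp_def by (rule LIMSEQ_offset)
    qed
  qed
qed


lemma one_plus_le_exp:
  fixes c r :: real assumes c: "c > 0"
  shows "1 + r \<le> (2 + 1/(2*c)) * exp (c * r\<^sup>2)"
proof -
  have "r \<le> 1/(2*c) + c * r\<^sup>2 / 2"
  proof -
    have "0 \<le> (c*r - 1)\<^sup>2 / (2*c)" using c by simp
    also have "(c*r - 1)\<^sup>2 / (2*c) = c * r\<^sup>2 / 2 - r + 1/(2*c)"
      using c by (simp add: field_simps power2_eq_square)
    finally show ?thesis by simp
  qed
  also have "1 + (1/(2*c) + c * r\<^sup>2 / 2) \<le> (2 + 1/(2*c)) * (1 + c * r\<^sup>2)"
    using c by (simp add: algebra_simps)
  also have "\<dots> \<le> (2 + 1/(2*c)) * exp (c * r\<^sup>2)"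
    using c by (intro mult_left_mono exp_ge_add_one_self) auto
  finally show ?thesis by simp
qed

lemma one_plus_pow_le_exp:
  fixes c r :: real assumes c: "c > 0" and r: "r \<ge> 0"
  shows "(1 + r)^n \<le> (2 + real n/(2*c))^n * exp (c * r\<^sup>2)"
proof (cases "n = 0")
  case True then show ?thesis using c by simp
next
  case False
  then have n: "real n > 0" by simp
  have "1 + r \<le> (2 + 1/(2*(c/n))) * exp ((c/n) * r\<^sup>2)"
    by (rule one_plus_le_exp) (use c n in simp)
  also have "1/(2*(c/n)) = real n/(2*c)" by simp
  finally have "(1 + r)^n \<le> ((2 + real n/(2*c)) * exp ((c/n) * r\<^sup>2))^n"
    using r by (intro power_mono) auto
  also have "\<dots> = (2 + real n/(2*c))^n * exp (c * r\<^sup>2)"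
    using n by (simp add: power_mult_distrib exp_of_nat_mult[symmetric])
  finally show ?thesis .
qed

lemma integrable_gauss_real:
  fixes c :: real assumes c: "c > 0"
  shows "integrable lborel (\<lambda>y::real^2. exp (- c * (norm y)\<^sup>2))"
proof -
  have "integrable lborel (\<lambda>y::real^2. norm (exp (- complex_of_real c * complex_of_real ((norm y)\<^sup>2))))"
    by (rule integrable_norm, rule gauss2_zero(1)) (use c in simp)
  moreover have "norm (exp (- complex_of_real c * complex_of_real ((norm y)\<^sup>2))) = exp (- c * (norm y)\<^sup>2)" for y :: "real^2"
    by (simp flip: of_real_mult of_real_minus exp_of_real)
  ultimately show ?thesis by simp
qed

lemma integrable_poly_gauss:
  fixes c :: real assumes c: "c > 0"
  shows "integrable lborel (\<lambda>y::real^2. (1 + norm y)^n * exp (- c * (norm y)\<^sup>2))"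
proof (rule Bochner_Integration.integrable_bound)
  let ?K = "(2 + real n/(2*(c/2)))^n"
  show "integrable lborel (\<lambda>y::real^2. ?K * exp (- (c/2) * (norm y)\<^sup>2))"
    using integrable_gauss_real[of "c/2"] c by simp
  show "AE y in lborel. norm ((1 + norm y)^n * exp (- c * (norm (y::real^2))\<^sup>2)) \<le> norm (?K * exp (- (c/2) * (norm y)\<^sup>2))"
  proof (rule AE_I2)
    fix y :: "real^2"
    have "(1 + norm y)^n \<le> ?K * exp ((c/2) * (norm y)\<^sup>2)"
      by (rule one_plus_pow_le_exp) (use c in auto)
    then have "(1 + norm y)^n * exp (- c * (norm y)\<^sup>2) \<le> ?K * exp ((c/2) * (norm y)\<^sup>2) * exp (- c * (norm y)\<^sup>2)"
      by (rule mult_right_mono) simp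
    also have "\<dots> = ?K * exp (- (c/2) * (norm y)\<^sup>2)"
      by (simp add: mult.assoc exp_add[symmetric])
    finally show "norm ((1 + norm y)^n * exp (- c * (norm y)\<^sup>2)) \<le> norm (?K * exp (- (c/2) * (norm y)\<^sup>2))"
      using c by simp
  qed
qed (measurable)

lemma integral_translate:
  fixes h :: "'a::euclidean_space \<Rightarrow> complex" assumes [measurable]: "h \<in> borel_measurable borel"
  shows "(LINT y|lborel. h (y + c)) = (LINT y|lborel. h y)"
proof -
  have "(LINT y|lborel. h y) = integral\<^sup>L (distr lborel borel ((+) c)) h"
    by (simp add: lborel_distr_plus)
  also have "\<dots> = (LINT y|lborel. h (c + y))"
    by (subst integral_distr) auto
  finally show ?thesis by (simp add: add.commute)
qed


context
  fixes \<alpha> :: complex and v :: "real^2"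
  assumes a: "Re \<alpha> > 0"
begin

abbreviation "EE l y \<equiv> exp (- \<alpha> * complex_of_real ((norm (y::real^2))\<^sup>2) - \<i> * complex_of_real l * complex_of_real (v \<bullet> y))"

lemma EE_meas: "(\<lambda>y. EE l y) \<in> borel_measurable lborel"
  unfolding measurable_lborel2
  by (intro borel_measurable_continuous_onI continuous_intros)

lemma EE_norm: "norm (EE l y) = exp (- Re \<alpha> * (norm y)\<^sup>2)"
  by simp

lemma EE_int: "integrable lborel (\<lambda>y. EE l y)"
proof (rule Bochner_Integration.integrable_bound)
  show "integrable lborel (\<lambda>y::real^2. exp (- Re \<alpha> * (norm y)\<^sup>2))"
    by (rule integrable_gauss_real[OF a])
  show "AE y in lborel. norm (EE l y) \<le> norm (exp (- Re \<alpha> * (norm y)\<^sup>2))"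
    by (rule AE_I2) simp
qed (rule EE_meas)

lemma EE_deriv_l: "((\<lambda>l. EE l y) has_vector_derivative (- \<i> * complex_of_real (v \<bullet> y) * EE l y)) (at l)"
proof -
  have "((\<lambda>z. exp (- \<alpha> * complex_of_real ((norm (y::real^2))\<^sup>2) - \<i> * z * complex_of_real (v \<bullet> y)))
        has_field_derivative (- \<i> * complex_of_real (v \<bullet> y) * EE l y)) (at (complex_of_real l))"
    by (auto intro!: derivative_eq_intros simp: algebra_simps)
  from has_vector_derivative_real_field[OF this] show ?thesis by simp
qed

lemma Phi_deriv:
  "((\<lambda>l. LINT y|lborel. EE l y) has_vector_derivative (LINT y|lborel. - \<i> * complex_of_real (v \<bullet> y) * EE l y)) (at l)"
proof (rule deriv_under_integral(2)[where r=1 and g="\<lambda>y. norm v * ((1 + norm y)^1 * exp (- Re \<alpha> * (norm y)\<^sup>2))"])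
  show "integrable lborel (\<lambda>y::real^2. norm v * ((1 + norm y)^1 * exp (- Re \<alpha> * (norm y)\<^sup>2)))"
    using integrable_poly_gauss[OF a, of 1] by simp
  show "integrable lborel (\<lambda>y. EE l y)" by (rule EE_int)
  show "(\<lambda>y. EE t y) \<in> borel_measurable lborel" for t by (rule EE_meas)
  show "(\<lambda>y. - \<i> * complex_of_real (v \<bullet> y) * EE l y) \<in> borel_measurable lborel"
    unfolding measurable_lborel2 by (intro borel_measurable_continuous_onI continuous_intros)
  show "((\<lambda>t. EE t y) has_vector_derivative (- \<i> * complex_of_real (v \<bullet> y) * EE t y)) (at t)" for t y
    by (rule EE_deriv_l)
  show "norm (- \<i> * complex_of_real (v \<bullet> y) * EE t y) \<le> norm v * ((1 + norm y)^1 * exp (- Re \<alpha> * (norm y)\<^sup>2))" for t y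
  proof -
    have "norm (- \<i> * complex_of_real (v \<bullet> y) * EE t y) = \<bar>v \<bullet> y\<bar> * exp (- Re \<alpha> * (norm y)\<^sup>2)"
      by (simp add: norm_mult)
    also have "\<dots> \<le> (norm v * (1 + norm y)) * exp (- Re \<alpha> * (norm y)\<^sup>2)"
    proof (rule mult_right_mono)
      have "\<bar>v \<bullet> y\<bar> \<le> norm v * norm y" by (rule Cauchy_Schwarz_ineq2)
      also have "\<dots> \<le> norm v * (1 + norm y)" by (intro mult_left_mono) auto
      finally show "\<bar>v \<bullet> y\<bar> \<le> norm v * (1 + norm y)" .
    qed simp
    finally show ?thesis by (simp add: mult.assoc)
  qed
qed simp

lemma norm_add_scaleR_sq: "(norm (y + t *\<^sub>R v))\<^sup>2 = (norm y)\<^sup>2 + 2 * t * (v \<bullet> y) + t\<^sup>2 * (norm v)\<^sup>2"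
  unfolding power2_norm_eq_inner by (simp add: inner_add_left inner_add_right inner_commute algebra_simps power2_eq_square)

lemma inner_add_scaleR: "v \<bullet> (y + t *\<^sub>R v) = v \<bullet> y + t * (norm v)\<^sup>2"
  by (simp add: inner_add_right power2_norm_eq_inner)

lemma norm_add_scaleR_lower: assumes "\<bar>t\<bar> < 1"
  shows "(norm y)\<^sup>2 / 2 - (norm v)\<^sup>2 \<le> (norm (y + t *\<^sub>R v))\<^sup>2"
proof -
  have "norm y \<le> norm (y + t *\<^sub>R v) + norm (t *\<^sub>R v)"
    by (metis add_diff_cancel norm_triangle_ineq4)
  also have "norm (t *\<^sub>R v) \<le> norm v" using assms by (simp add: mult_left_le_one_le)
  finally have "norm y \<le> norm (y + t *\<^sub>R v) + norm v" by simp
  then have "(norm y)\<^sup>2 \<le> (norm (y + t *\<^sub>R v) + norm v)\<^sup>2" by (intro power_mono) auto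
  also have "\<dots> \<le> 2 * (norm (y + t *\<^sub>R v))\<^sup>2 + 2 * (norm v)\<^sup>2"
    using zero_le_power2[of "norm (y + t *\<^sub>R v) - norm v"] by (simp add: power2_eq_square algebra_simps)
  finally show ?thesis by simp
qed

lemma IBP_identity:
  "(LINT y|lborel. (- 2 * \<alpha> * complex_of_real (v \<bullet> y) - \<i> * complex_of_real l * complex_of_real ((norm v)\<^sup>2)) * EE l y) = 0"
proof -
  define FF where "FF t y = exp (- \<alpha> * (complex_of_real ((norm (y::real^2))\<^sup>2) + 2 * complex_of_real t * complex_of_real (v \<bullet> y)
      + (complex_of_real t)\<^sup>2 * complex_of_real ((norm v)\<^sup>2)) - \<i> * complex_of_real l * (complex_of_real (v \<bullet> y) + complex_of_real t * complex_of_real ((norm v)\<^sup>2)))" for t y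
  define FF' where "FF' t y = (- \<alpha> * (2 * complex_of_real (v \<bullet> y) + 2 * complex_of_real t * complex_of_real ((norm v)\<^sup>2))
      - \<i> * complex_of_real l * complex_of_real ((norm v)\<^sup>2)) * FF t y" for t y
  have FF_eq: "FF t y = EE l (y + t *\<^sub>R v)" for t y
    unfolding FF_def norm_add_scaleR_sq inner_add_scaleR by (simp add: algebra_simps)
  have FF_meas: "(\<lambda>y. FF t y) \<in> borel_measurable lborel" for t
    unfolding measurable_lborel2 FF_def by (intro borel_measurable_continuous_onI continuous_intros)
  have FF'_meas: "(\<lambda>y. FF' t y) \<in> borel_measurable lborel" for t
    unfolding measurable_lborel2 FF'_def FF_def by (intro borel_measurable_continuous_onI continuous_intros)
  have FF_der: "((\<lambda>t. FF t y) has_vector_derivative FF' t y) (at t)" for t y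
  proof -
    have "((\<lambda>z. exp (- \<alpha> * (complex_of_real ((norm (y::real^2))\<^sup>2) + 2 * z * complex_of_real (v \<bullet> y)
      + z\<^sup>2 * complex_of_real ((norm v)\<^sup>2)) - \<i> * complex_of_real l * (complex_of_real (v \<bullet> y) + z * complex_of_real ((norm v)\<^sup>2))))
      has_field_derivative FF' t y) (at (complex_of_real t))"
      unfolding FF'_def FF_def by (auto intro!: derivative_eq_intros simp: algebra_simps power2_eq_square)
    from has_vector_derivative_real_field[OF this] show ?thesis unfolding FF_def by simp
  qed
  define K where "K = 2 * norm \<alpha> * norm v + 2 * norm \<alpha> * (norm v)\<^sup>2 + \<bar>l\<bar> * (norm v)\<^sup>2"
  define g where "g y = K * exp (Re \<alpha> * (norm v)\<^sup>2) * ((1 + norm y)^1 * exp (- (Re \<alpha> / 2) * (norm y)\<^sup>2))" for y :: "real^2"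
  have g_int: "integrable lborel g"
    unfolding g_def using integrable_poly_gauss[of "Re \<alpha> / 2" 1] a by simp
  have K0: "K \<ge> 0" unfolding K_def by simp
  have FF'_bound: "norm (FF' t y) \<le> g y" if t: "t \<in> ball 0 1" for t y
  proof -
    have t1: "\<bar>t\<bar> < 1" using t by simp
    have c1: "norm (- \<alpha> * (2 * complex_of_real (v \<bullet> y) + 2 * complex_of_real t * complex_of_real ((norm v)\<^sup>2))
      - \<i> * complex_of_real l * complex_of_real ((norm v)\<^sup>2)) \<le> K * (1 + norm y)"
    proof -
      have "norm (- \<alpha> * (2 * complex_of_real (v \<bullet> y) + 2 * complex_of_real t * complex_of_real ((norm v)\<^sup>2))
         - \<i> * complex_of_real l * complex_of_real ((norm v)\<^sup>2))
        \<le> norm \<alpha> * (2 * \<bar>v \<bullet> y\<bar> + 2 * \<bar>t\<bar> * (norm v)\<^sup>2) + \<bar>l\<bar> * (norm v)\<^sup>2"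
      proof -
        have "norm (2 * complex_of_real (v \<bullet> y) + 2 * complex_of_real t * complex_of_real ((norm v)\<^sup>2))
          \<le> 2 * \<bar>v \<bullet> y\<bar> + 2 * \<bar>t\<bar> * (norm v)\<^sup>2"
          by (rule order_trans[OF norm_triangle_ineq]) (simp add: norm_mult norm_power)
        then have "norm (- \<alpha> * (2 * complex_of_real (v \<bullet> y) + 2 * complex_of_real t * complex_of_real ((norm v)\<^sup>2)))
          \<le> norm \<alpha> * (2 * \<bar>v \<bullet> y\<bar> + 2 * \<bar>t\<bar> * (norm v)\<^sup>2)"
          by (simp add: norm_mult mult_left_mono)
        moreover have "norm (\<i> * complex_of_real l * complex_of_real ((norm v)\<^sup>2)) = \<bar>l\<bar> * (norm v)\<^sup>2"
          by (simp add: norm_mult norm_power)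
        ultimately show ?thesis
          using norm_triangle_ineq4[of "- \<alpha> * (2 * complex_of_real (v \<bullet> y) + 2 * complex_of_real t * complex_of_real ((norm v)\<^sup>2))"
              "\<i> * complex_of_real l * complex_of_real ((norm v)\<^sup>2)"] by linarith
      qed
      also have "\<dots> \<le> norm \<alpha> * (2 * (norm v * (1 + norm y)) + 2 * ((norm v)\<^sup>2 * (1 + norm y))) + \<bar>l\<bar> * ((norm v)\<^sup>2 * (1 + norm y))"
      proof -
        have "\<bar>v \<bullet> y\<bar> \<le> norm v * norm y" by (rule Cauchy_Schwarz_ineq2)
        also have "\<dots> \<le> norm v * (1 + norm y)" by (rule mult_left_mono) auto
        finally have h1: "\<bar>v \<bullet> y\<bar> \<le> norm v * (1 + norm y)" .
        have h3: "(norm v)\<^sup>2 * 1 \<le> (norm v)\<^sup>2 * (1 + norm y)" by (rule mult_left_mono) auto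
        have "\<bar>t\<bar> * (norm v)\<^sup>2 \<le> 1 * (norm v)\<^sup>2" by (rule mult_right_mono) (use t1 in auto)
        with h3 have h2: "\<bar>t\<bar> * (norm v)\<^sup>2 \<le> (norm v)\<^sup>2 * (1 + norm y)" by simp
        have "2 * \<bar>v \<bullet> y\<bar> + 2 * \<bar>t\<bar> * (norm v)\<^sup>2 \<le> 2 * (norm v * (1 + norm y)) + 2 * ((norm v)\<^sup>2 * (1 + norm y))"
          using h1 h2 by linarith
        then have "norm \<alpha> * (2 * \<bar>v \<bullet> y\<bar> + 2 * \<bar>t\<bar> * (norm v)\<^sup>2) \<le> norm \<alpha> * (2 * (norm v * (1 + norm y)) + 2 * ((norm v)\<^sup>2 * (1 + norm y)))"
          by (rule mult_left_mono) simp
        moreover have "\<bar>l\<bar> * (norm v)\<^sup>2 \<le> \<bar>l\<bar> * ((norm v)\<^sup>2 * (1 + norm y))"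
          using h3 by (intro mult_left_mono) auto
        ultimately show ?thesis by linarith
      qed
      also have "\<dots> = K * (1 + norm y)" unfolding K_def by (simp add: algebra_simps)
      finally show ?thesis .
    qed
    have c2: "norm (FF t y) \<le> exp (Re \<alpha> * (norm v)\<^sup>2) * exp (- (Re \<alpha> / 2) * (norm y)\<^sup>2)"
    proof -
      have "norm (FF t y) = exp (- Re \<alpha> * (norm (y + t *\<^sub>R v))\<^sup>2)" unfolding FF_eq by simp
      also have "\<dots> \<le> exp (- Re \<alpha> * ((norm y)\<^sup>2 / 2 - (norm v)\<^sup>2))"
        using norm_add_scaleR_lower[OF t1, of y] a by (simp add: mult_left_mono)
      also have "\<dots> = exp (Re \<alpha> * (norm v)\<^sup>2) * exp (- (Re \<alpha> / 2) * (norm y)\<^sup>2)"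
        by (simp add: exp_add[symmetric] algebra_simps)
      finally show ?thesis .
    qed
    have "norm (FF' t y) \<le> (K * (1 + norm y)) * (exp (Re \<alpha> * (norm v)\<^sup>2) * exp (- (Re \<alpha> / 2) * (norm y)\<^sup>2))"
      unfolding FF'_def norm_mult by (rule mult_mono[OF c1 c2]) (use K0 in auto)
    also have "\<dots> = g y" unfolding g_def by (simp add: algebra_simps)
    finally show ?thesis .
  qed
  have FF0: "FF 0 y = EE l y" for y unfolding FF_eq by simp
  have "((\<lambda>t. LINT y|lborel. FF t y) has_vector_derivative (LINT y|lborel. FF' 0 y)) (at 0)"
  proof (rule deriv_under_integral(2)[where r=1 and g=g])
    show "integrable lborel (FF 0)" unfolding FF0[abs_def] by (rule EE_int)
  qed (use FF_meas FF'_meas FF_der g_int FF'_bound in auto)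
  moreover have "(LINT y|lborel. FF t y) = (LINT y|lborel. EE l y)" for t
  proof -
    have "(LINT y|lborel. FF t y) = (LINT y|lborel. (\<lambda>y. EE l y) (y + t *\<^sub>R v))" unfolding FF_eq ..
    also have "\<dots> = (LINT y|lborel. EE l y)"
      by (rule integral_translate) (use EE_meas in simp)
    finally show ?thesis .
  qed
  ultimately have "((\<lambda>t. LINT y|lborel. EE l y) has_vector_derivative (LINT y|lborel. FF' 0 y)) (at 0)" by simp
  then have "(LINT y|lborel. FF' 0 y) = 0"
    using vector_derivative_unique_at has_vector_derivative_const by blast
  moreover have "FF' 0 y = (- 2 * \<alpha> * complex_of_real (v \<bullet> y) - \<i> * complex_of_real l * complex_of_real ((norm v)\<^sup>2)) * EE l y" for y
    unfolding FF'_def FF0 by (simp add: algebra_simps)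
  ultimately show ?thesis by simp
qed

lemma BEE_int: "integrable lborel (\<lambda>y. complex_of_real (v \<bullet> y) * EE l y)"
proof (rule Bochner_Integration.integrable_bound)
  show "integrable lborel (\<lambda>y::real^2. norm v * ((1 + norm y)^1 * exp (- Re \<alpha> * (norm y)\<^sup>2)))"
    using integrable_poly_gauss[OF a, of 1] by simp
  show "(\<lambda>y. complex_of_real (v \<bullet> y) * EE l y) \<in> borel_measurable lborel"
    unfolding measurable_lborel2 by (intro borel_measurable_continuous_onI continuous_intros)
  show "AE y in lborel. norm (complex_of_real (v \<bullet> y) * EE l y) \<le> norm (norm v * ((1 + norm y)^1 * exp (- Re \<alpha> * (norm y)\<^sup>2)))"
  proof (rule AE_I2)
    fix y :: "real^2"
    have "\<bar>v \<bullet> y\<bar> \<le> norm v * norm y" by (rule Cauchy_Schwarz_ineq2)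
    also have "\<dots> \<le> norm v * (1 + norm y)" by (rule mult_left_mono) auto
    finally have "\<bar>v \<bullet> y\<bar> * exp (- Re \<alpha> * (norm y)\<^sup>2) \<le> norm v * (1 + norm y) * exp (- Re \<alpha> * (norm y)\<^sup>2)"
      by (rule mult_right_mono) simp
    then show "norm (complex_of_real (v \<bullet> y) * EE l y) \<le> norm (norm v * ((1 + norm y)^1 * exp (- Re \<alpha> * (norm y)\<^sup>2)))"
      by (simp add: norm_mult mult.assoc)
  qed
qed

lemma gauss_fourier:
  "(LINT y|lborel. EE 1 y) = (pi / \<alpha>) * exp (- complex_of_real ((norm v)\<^sup>2) / (4 * \<alpha>))"
proof -
  have a0: "\<alpha> \<noteq> 0" using a by auto
  define Nv where "Nv = complex_of_real ((norm v)\<^sup>2)"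
  define \<Phi> where "\<Phi> l = (LINT y|lborel. EE l y)" for l
  have J: "(LINT y|lborel. complex_of_real (v \<bullet> y) * EE l y) = - \<i> * complex_of_real l * Nv * \<Phi> l / (2 * \<alpha>)" for l
  proof -
    have "0 = (LINT y|lborel. (- 2 * \<alpha> * complex_of_real (v \<bullet> y) - \<i> * complex_of_real l * Nv) * EE l y)"
      using IBP_identity[of l] unfolding Nv_def by simp
    also have "\<dots> = (LINT y|lborel. (- 2 * \<alpha>) * (complex_of_real (v \<bullet> y) * EE l y) - (\<i> * complex_of_real l * Nv) * EE l y)"
      by (simp add: algebra_simps)
    also have "\<dots> = (- 2 * \<alpha>) * (LINT y|lborel. complex_of_real (v \<bullet> y) * EE l y) - (\<i> * complex_of_real l * Nv) * \<Phi> l"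
      unfolding \<Phi>_def using BEE_int[of l] EE_int[of l] by simp
    finally show ?thesis using a0 by (simp add: field_simps)
  qed
  have dPhi: "(\<Phi> has_vector_derivative (- complex_of_real l * Nv * \<Phi> l / (2 * \<alpha>))) (at l)" for l
  proof -
    have "(LINT y|lborel. - \<i> * complex_of_real (v \<bullet> y) * EE l y) = - \<i> * (LINT y|lborel. complex_of_real (v \<bullet> y) * EE l y)"
      by (simp add: mult.assoc)
    also have "\<dots> = - complex_of_real l * Nv * \<Phi> l / (2 * \<alpha>)" unfolding J by (simp add: field_simps)
    finally show ?thesis using Phi_deriv[of l] unfolding \<Phi>_def by simp
  qed
  define H where "H l = \<Phi> l * exp ((complex_of_real l)\<^sup>2 * Nv / (4 * \<alpha>))" for l
  have dH: "(H has_vector_derivative 0) (at l)" for l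
  proof -
    have e: "((\<lambda>z. exp (z\<^sup>2 * Nv / (4 * \<alpha>))) has_field_derivative (2 * complex_of_real l * Nv / (4 * \<alpha>)) * exp ((complex_of_real l)\<^sup>2 * Nv / (4 * \<alpha>))) (at (complex_of_real l))"
      using a0 by (auto intro!: derivative_eq_intros simp: algebra_simps)
    have "(H has_vector_derivative (\<Phi> l * ((2 * complex_of_real l * Nv / (4 * \<alpha>)) * exp ((complex_of_real l)\<^sup>2 * Nv / (4 * \<alpha>)))
           + (- complex_of_real l * Nv * \<Phi> l / (2 * \<alpha>)) * exp ((complex_of_real l)\<^sup>2 * Nv / (4 * \<alpha>)))) (at l)"
      unfolding H_def
      by (rule has_vector_derivative_mult[OF dPhi has_vector_derivative_real_field[OF e]])
    moreover have "\<Phi> l * ((2 * complex_of_real l * Nv / (4 * \<alpha>)) * exp ((complex_of_real l)\<^sup>2 * Nv / (4 * \<alpha>)))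
           + (- complex_of_real l * Nv * \<Phi> l / (2 * \<alpha>)) * exp ((complex_of_real l)\<^sup>2 * Nv / (4 * \<alpha>)) = 0"
      using a0 by (simp add: field_simps)
    ultimately show ?thesis by simp
  qed
  have "\<exists>c. \<forall>x\<in>UNIV. H x = c"
    by (rule has_derivative_zero_constant[of UNIV]) (use dH in \<open>auto simp: has_vector_derivative_def\<close>)
  then have "H 1 = H 0" by auto
  also have "H 0 = pi / \<alpha>"
    unfolding H_def \<Phi>_def using gauss2_zero(2)[OF a] by simp
  finally have "\<Phi> 1 * exp (Nv / (4 * \<alpha>)) = pi / \<alpha>" unfolding H_def by simp
  then have "\<Phi> 1 = pi / \<alpha> / exp (Nv / (4 * \<alpha>))"
  proof -
    have g: "x = c / e" if "x * e = c" "e \<noteq> 0" for x e c :: complex using that by (metis nonzero_mult_div_cancel_right)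
    show ?thesis by (rule g[OF \<open>\<Phi> 1 * exp (Nv / (4 * \<alpha>)) = pi / \<alpha>\<close> exp_not_eq_zero])
  qed
  then have "\<Phi> 1 = pi / \<alpha> * exp (- Nv / (4 * \<alpha>))"
    by (simp only: divide_inverse[of _ "exp _"] minus_divide_left[symmetric] exp_minus)
  then show ?thesis unfolding \<Phi>_def Nv_def by simp
qed

end


lemma exp_minus_one_bound:
  fixes z :: complex assumes z: "norm z \<le> 1/4"
  shows "norm (exp z - 1) \<le> 2 * norm z"
proof -
  have der: "((\<lambda>s. exp (complex_of_real s * z)) has_vector_derivative z * exp (complex_of_real s * z)) (at s)" for s
  proof -
    have "((\<lambda>w. exp (w * z)) has_field_derivative z * exp (complex_of_real s * z)) (at (complex_of_real s))"
      by (auto intro!: derivative_eq_intros)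
    from has_vector_derivative_real_field[OF this] show ?thesis .
  qed
  have bd: "norm (z * exp (complex_of_real s * z)) \<le> 2 * norm z" if "s \<in> ball 0 2" for s
  proof -
    have "\<bar>s\<bar> * norm z \<le> 2 * (1/4)" by (rule mult_mono) (use that z in auto)
    then have "norm (complex_of_real s * z) \<le> 2 * (1/4)" by (simp add: norm_mult)
    then have "norm (exp (complex_of_real s * z)) \<le> 1 + 2 * norm (complex_of_real s * z)"
      by (intro exp_bound_lemma) simp
    also have "\<dots> \<le> 2" using \<open>norm (complex_of_real s * z) \<le> 2 * (1/4)\<close> by simp
    finally show ?thesis by (simp add: norm_mult mult.commute mult_left_mono)
  qed
  have "norm ((\<lambda>s. exp (complex_of_real s * z)) 1 - (\<lambda>s. exp (complex_of_real s * z)) 0) \<le> 2 * norm z * \<bar>1 - 0\<bar>"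
    by (rule mvt_ball[where r=2]) (use der bd in auto)
  then show ?thesis by simp
qed

definition psi :: "real^2 \<Rightarrow> complex" where "psi y = complex_of_real (exp (- (norm y)\<^sup>2))"

definition alp :: "real \<Rightarrow> complex" where "alp \<tau> = 1 - \<i> * complex_of_real (1 / (4 * \<tau>))"

definition EU :: "real \<Rightarrow> real^2 \<Rightarrow> complex" where
  "EU \<tau> x = \<i> * complex_of_real ((norm x)\<^sup>2 / (4 * \<tau>)) - complex_of_real ((norm x)\<^sup>2 / (4 * \<tau>\<^sup>2)) / (4 * alp \<tau>)"

lemma Re_alp [simp]: "Re (alp \<tau>) = 1" by (simp add: alp_def)

lemma alp_nz [simp]: "alp \<tau> \<noteq> 0" using Re_alp[of \<tau>] by (metis one_neq_zero zero_complex.sel(1))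

lemma U_formula:
  assumes t: "\<tau> > 0"
  shows "schrod_prop \<tau> psi x = (1 / (1 + 4 * \<i> * complex_of_real \<tau>)) * exp (EU \<tau> x)"
proof -
  define v where "v = (1 / (2 * \<tau>)) *\<^sub>R x"
  have a: "Re (alp \<tau>) > 0" by simp
  have pt: "exp (\<i> * complex_of_real ((norm (x - y))\<^sup>2 / (4 * \<tau>))) * psi y
      = exp (\<i> * complex_of_real ((norm x)\<^sup>2 / (4 * \<tau>))) *
        exp (- alp \<tau> * complex_of_real ((norm y)\<^sup>2) - \<i> * complex_of_real 1 * complex_of_real (v \<bullet> y))" for y
  proof -
    have n: "(norm (x - y))\<^sup>2 = (norm x)\<^sup>2 - 2 * (x \<bullet> y) + (norm y)\<^sup>2"
      unfolding power2_norm_eq_inner by (simp add: inner_diff_left inner_diff_right inner_commute)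
    have vy: "v \<bullet> y = (x \<bullet> y) / (2 * \<tau>)" unfolding v_def by simp
    have "exp (\<i> * complex_of_real ((norm (x - y))\<^sup>2 / (4 * \<tau>))) * psi y
        = exp (\<i> * complex_of_real ((norm (x - y))\<^sup>2 / (4 * \<tau>)) + complex_of_real (- (norm y)\<^sup>2))"
      by (simp only: psi_def exp_add exp_of_real)
    also have "\<i> * complex_of_real ((norm (x - y))\<^sup>2 / (4 * \<tau>)) + complex_of_real (- (norm y)\<^sup>2)
        = \<i> * complex_of_real ((norm x)\<^sup>2 / (4 * \<tau>)) +
          (- alp \<tau> * complex_of_real ((norm y)\<^sup>2) - \<i> * complex_of_real 1 * complex_of_real (v \<bullet> y))"
      unfolding n vy alp_def using t by (simp add: field_simps)
    finally show ?thesis by (simp add: exp_add)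
  qed
  have "schrod_prop \<tau> psi x = (1 / (4 * complex_of_real pi * \<i> * complex_of_real \<tau>)) *
      (LINT y|lborel. exp (\<i> * complex_of_real ((norm x)\<^sup>2 / (4 * \<tau>))) *
        exp (- alp \<tau> * complex_of_real ((norm y)\<^sup>2) - \<i> * complex_of_real 1 * complex_of_real (v \<bullet> y)))"
    unfolding schrod_prop_def using t pt by simp
  also have "\<dots> = (1 / (4 * complex_of_real pi * \<i> * complex_of_real \<tau>)) *
      (exp (\<i> * complex_of_real ((norm x)\<^sup>2 / (4 * \<tau>))) *
        ((pi / alp \<tau>) * exp (- complex_of_real ((norm v)\<^sup>2) / (4 * alp \<tau>))))"
    by (simp only: integral_mult_right_zero gauss_fourier[OF a])
  also have "(norm v)\<^sup>2 = (norm x)\<^sup>2 / (4 * \<tau>\<^sup>2)"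
    unfolding v_def using t by (simp add: power2_eq_square field_simps)
  also have "(1 / (4 * complex_of_real pi * \<i> * complex_of_real \<tau>)) *
      (exp (\<i> * complex_of_real ((norm x)\<^sup>2 / (4 * \<tau>))) *
        ((pi / alp \<tau>) * exp (- complex_of_real ((norm x)\<^sup>2 / (4 * \<tau>\<^sup>2)) / (4 * alp \<tau>))))
      = (pi / (4 * complex_of_real pi * \<i> * complex_of_real \<tau> * alp \<tau>)) * exp (EU \<tau> x)"
    unfolding EU_def by (simp add: exp_diff exp_minus field_simps)
  also have "4 * complex_of_real pi * \<i> * complex_of_real \<tau> * alp \<tau> = complex_of_real pi * (1 + 4 * \<i> * complex_of_real \<tau>)"
    unfolding alp_def using t by (simp add: field_simps)
  finally show ?thesis by simp
qed

lemma w_eq: "1 + 4 * \<i> * complex_of_real \<tau> = Complex 1 (4 * \<tau>)"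
  by (simp add: complex_eq_iff)

lemma Re_EU_nonpos: assumes t: "\<tau> > 0" shows "Re (EU \<tau> x) \<le> 0"
proof -
  have "Re (complex_of_real ((norm x)\<^sup>2 / (4 * \<tau>\<^sup>2)) / (4 * alp \<tau>)) \<ge> 0"
    by (simp add: Re_divide alp_def)
  then show ?thesis unfolding EU_def by simp
qed

lemma norm_c_le1: "norm (1 / (1 + 4 * \<i> * complex_of_real \<tau>)) \<le> 1"
proof -
  have "1 \<le> norm (Complex 1 (4 * \<tau>))" using abs_Re_le_cmod[of "Complex 1 (4 * \<tau>)"] by simp
  then show ?thesis unfolding w_eq by (simp add: norm_divide divide_le_eq)
qed

lemma U_bound: assumes t: "\<tau> > 0" shows "norm (schrod_prop \<tau> psi x) \<le> 1"
proof -
  have "norm (exp (EU \<tau> x)) \<le> 1" using Re_EU_nonpos[OF t, of x] by simp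
  then have "norm (1 / (1 + 4 * \<i> * complex_of_real \<tau>)) * norm (exp (EU \<tau> x)) \<le> 1 * 1"
    by (intro mult_mono norm_c_le1) auto
  then show ?thesis unfolding U_formula[OF t] norm_mult by simp
qed

lemma U_im_bound:
  assumes t: "\<tau> \<ge> 3" and x: "norm x \<le> 1"
  shows "- Im (schrod_prop \<tau> psi x) \<ge> 1 / (10 * \<tau>)"
proof -
  have t0: "\<tau> > 0" using t by simp
  define c where "c = 1 / (1 + 4 * \<i> * complex_of_real \<tau>)"
  define E where "E = EU \<tau> x"
  have Imc: "- Im c = 4 * \<tau> / (1 + 16 * \<tau>\<^sup>2)"
    unfolding c_def w_eq by (simp add: Im_divide cmod_def power2_eq_square)
  have normc: "norm c \<le> 1 / (4 * \<tau>)"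
  proof -
    have "4 * \<tau> \<le> norm (Complex 1 (4 * \<tau>))" using abs_Im_le_cmod[of "Complex 1 (4 * \<tau>)"] t0 by simp
    then show ?thesis unfolding c_def w_eq using t0 by (simp add: norm_divide divide_simps)
  qed
  have r: "(norm x)\<^sup>2 \<le> 1" using x by (simp add: power_le_one)
  have nE: "norm E \<le> 1 / (3 * \<tau>)"
  proof -
    have n1: "norm (\<i> * complex_of_real ((norm x)\<^sup>2 / (4 * \<tau>))) \<le> 1 / (4 * \<tau>)"
    proof -
      have h: "norm (\<i> * complex_of_real a) = \<bar>a\<bar>" for a by (simp add: norm_mult)
      have "\<bar>(norm x)\<^sup>2 / (4 * \<tau>)\<bar> \<le> 1 / (4 * \<tau>)" using r t0 by (simp add: divide_right_mono)
      then show ?thesis by (simp only: h)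
    qed
    have "norm (4 * alp \<tau>) \<ge> 4" using abs_Re_le_cmod[of "4 * alp \<tau>"] by simp
    then have "norm (complex_of_real ((norm x)\<^sup>2 / (4 * \<tau>\<^sup>2)) / (4 * alp \<tau>)) \<le> ((norm x)\<^sup>2 / (4 * \<tau>\<^sup>2)) / 4"
    proof -
      assume n4: "norm (4 * alp \<tau>) \<ge> 4"
      have h2: "norm (complex_of_real a / w) = \<bar>a\<bar> / norm w" for a w by (simp add: norm_divide)
      have A0: "(norm x)\<^sup>2 / (4 * \<tau>\<^sup>2) \<ge> 0" by simp
      have "((norm x)\<^sup>2 / (4 * \<tau>\<^sup>2)) / norm (4 * alp \<tau>) \<le> ((norm x)\<^sup>2 / (4 * \<tau>\<^sup>2)) / 4"
        by (rule divide_left_mono) (use n4 A0 in auto)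
      then show ?thesis using A0 by (simp only: h2 abs_of_nonneg)
    qed
    also have "\<dots> \<le> (1 / (4 * \<tau>\<^sup>2)) / 4" using r t0 by (simp add: divide_right_mono)
    also have "\<dots> \<le> 1 / (48 * \<tau>)" using t t0 by (simp add: divide_simps power2_eq_square)
    finally have n2: "norm (complex_of_real ((norm x)\<^sup>2 / (4 * \<tau>\<^sup>2)) / (4 * alp \<tau>)) \<le> 1 / (48 * \<tau>)" .
    have "norm E \<le> 1 / (4 * \<tau>) + 1 / (48 * \<tau>)"
      unfolding E_def EU_def using norm_triangle_ineq4[of "\<i> * complex_of_real ((norm x)\<^sup>2 / (4 * \<tau>))"
        "complex_of_real ((norm x)\<^sup>2 / (4 * \<tau>\<^sup>2)) / (4 * alp \<tau>)"] n1 n2 by linarith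
    also have "\<dots> \<le> 1 / (3 * \<tau>)" using t0 by (simp add: divide_simps)
    finally show ?thesis .
  qed
  have "norm E \<le> 1/4" using nE t t0 by (smt (verit) divide_le_eq_1_pos frac_le)
  then have ne: "norm (exp E - 1) \<le> 2 * norm E" by (rule exp_minus_one_bound)
  have "norm (c * (exp E - 1)) \<le> (1 / (4 * \<tau>)) * (2 * (1 / (3 * \<tau>)))"
    unfolding norm_mult by (rule mult_mono) (use normc ne nE t0 in auto)
  also have "\<dots> = 1 / (6 * \<tau>\<^sup>2)" by (simp add: power2_eq_square)
  finally have bd: "norm (c * (exp E - 1)) \<le> 1 / (6 * \<tau>\<^sup>2)" .
  have "schrod_prop \<tau> psi x = c + c * (exp E - 1)"
    unfolding U_formula[OF t0] c_def E_def by (simp add: algebra_simps add_divide_distrib[symmetric])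
  then have "- Im (schrod_prop \<tau> psi x) = - Im c - Im (c * (exp E - 1))" by simp
  moreover have "- Im (c * (exp E - 1)) \<ge> - (1 / (6 * \<tau>\<^sup>2))"
    using abs_Im_le_cmod[of "c * (exp E - 1)"] bd by linarith
  moreover have "4 * \<tau> / (1 + 16 * \<tau>\<^sup>2) - 1 / (6 * \<tau>\<^sup>2) \<ge> 1 / (10 * \<tau>)"
  proof -
    have tt: "\<tau> * \<tau> \<ge> 9" using mult_mono[of 3 \<tau> 3 \<tau>] t by simp
    have "4 * \<tau> / (1 + 16 * \<tau>\<^sup>2) \<ge> 1 / (5 * \<tau>)"
      using t0 t tt by (simp add: divide_simps power2_eq_square)
    moreover have "1 / (5 * \<tau>) - 1 / (6 * \<tau>\<^sup>2) \<ge> 1 / (10 * \<tau>)"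
      using t0 t tt by (simp add: divide_simps power2_eq_square)
    ultimately show ?thesis by linarith
  qed
  ultimately show ?thesis using Imc by linarith
qed


lemma gauss_1d:
  fixes \<sigma> :: real assumes s: "\<sigma> > 0"
  shows "integrable lborel (\<lambda>x. exp (- x\<^sup>2 / (2 * \<sigma>\<^sup>2)))"
    and "(LINT x|lborel. exp (- x\<^sup>2 / (2 * \<sigma>\<^sup>2))) = sqrt (2 * pi * \<sigma>\<^sup>2)"
proof -
  have e: "exp (- x\<^sup>2 / (2 * \<sigma>\<^sup>2)) = sqrt (2 * pi * \<sigma>\<^sup>2) * normal_density 0 \<sigma> x" for x
    unfolding normal_density_def using s by simp
  show "integrable lborel (\<lambda>x. exp (- x\<^sup>2 / (2 * \<sigma>\<^sup>2)))" unfolding e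
    by (intro integrable_mult_right integrable_normal_density) (use s in auto)
  show "(LINT x|lborel. exp (- x\<^sup>2 / (2 * \<sigma>\<^sup>2))) = sqrt (2 * pi * \<sigma>\<^sup>2)" unfolding e using s by simp
qed

definition phiN :: "real \<Rightarrow> real \<Rightarrow> real" where "phiN N s = exp (- s\<^sup>2 / (2 * N\<^sup>2))"

definition FN :: "real \<Rightarrow> real \<Rightarrow> real^2 \<Rightarrow> complex" where
  "FN N s y = complex_of_real (exp (- s\<^sup>2 / (2 * N\<^sup>2)) * exp (- (norm y)\<^sup>2))"

lemma phiN_int: "N > 0 \<Longrightarrow> integrable lborel (phiN N)"
  unfolding phiN_def[abs_def] by (rule gauss_1d(1))

lemma phiN_nonneg: "phiN N s \<ge> 0" by (simp add: phiN_def)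

lemma phiN_le1: "phiN N s \<le> 1" by (simp add: phiN_def)

lemma phiN_lower: assumes "N > 0" "\<bar>s\<bar> \<le> N" shows "phiN N s \<ge> exp (- 1/2)"
proof -
  have "\<bar>s\<bar>\<^sup>2 \<le> N\<^sup>2" using assms by (intro power_mono) auto
  then have "s\<^sup>2 \<le> N\<^sup>2" by simp
  then have "s\<^sup>2 / (2 * N\<^sup>2) \<le> 1/2" using assms by (simp add: divide_simps)
  then show ?thesis unfolding phiN_def by simp
qed

lemma sp_scale: "schrod_prop \<tau> (\<lambda>y. c * f y) x = c * schrod_prop \<tau> f x"
proof (cases "\<tau> = 0")
  case True then show ?thesis by (simp add: schrod_prop_def)
next
  case False
  have "(LINT y|lborel. exp (\<i> * complex_of_real ((norm (x - y))\<^sup>2 / (4 * \<tau>))) * (c * f y))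
      = (LINT y|lborel. c * (exp (\<i> * complex_of_real ((norm (x - y))\<^sup>2 / (4 * \<tau>))) * f y))"
    by (simp add: algebra_simps)
  also have "\<dots> = c * (LINT y|lborel. exp (\<i> * complex_of_real ((norm (x - y))\<^sup>2 / (4 * \<tau>))) * f y)"
    by (rule integral_mult_right_zero)
  finally show ?thesis using False unfolding schrod_prop_def by simp
qed

lemma FN_eq: "FN N s = (\<lambda>y. complex_of_real (phiN N s) * psi y)"
  by (auto simp: FN_def phiN_def psi_def fun_eq_iff)

lemma U_closed: "\<tau> > 0 \<Longrightarrow> schrod_prop \<tau> psi x = (1 / (1 + 4 * \<i> * complex_of_real \<tau>)) * exp (EU \<tau> x)"
  by (rule U_formula)

lemma duhamel_formula:
  "duhamel (FN N) t x = (LINT s:{..<t}|lborel. complex_of_real (phiN N s) * ((1 / (1 + 4 * \<i> * complex_of_real (t - s))) * exp (EU (t - s) x)))"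
  unfolding duhamel_def
proof (rule set_lebesgue_integral_cong, simp, intro allI impI)
  fix s assume "s \<in> {..<t}"
  then have "t - s > 0" by simp
  show "schrod_prop (t - s) (FN N s) x = complex_of_real (phiN N s) * ((1 / (1 + 4 * \<i> * complex_of_real (t - s))) * exp (EU (t - s) x))"
    by (simp only: FN_eq sp_scale U_closed[OF \<open>t - s > 0\<close>])
qed

definition WW :: "real \<Rightarrow> real^2 \<Rightarrow> complex" where
  "WW \<tau> x = (1 / (1 + 4 * \<i> * complex_of_real \<tau>)) * exp (EU \<tau> x)"

lemma WW_meas: "(\<lambda>s. complex_of_real (phiN N s) * WW (t - s) x) \<in> borel_measurable lborel"
  unfolding WW_def EU_def alp_def phiN_def by measurable

lemma WW_bound: "\<tau> > 0 \<Longrightarrow> norm (WW \<tau> x) \<le> 1"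
  using U_bound U_formula unfolding WW_def by metis

lemma WW_im: "\<tau> \<ge> 3 \<Longrightarrow> norm x \<le> 1 \<Longrightarrow> - Im (WW \<tau> x) \<ge> 1 / (10 * \<tau>)"
  using U_im_bound U_formula unfolding WW_def by (metis dual_order.strict_trans1 zero_less_numeral)

lemma duh_integrable:
  assumes N: "N > 0"
  shows "set_integrable lborel {..<t} (\<lambda>s. complex_of_real (phiN N s) * WW (t - s) x)"
  unfolding set_integrable_def
proof (rule Bochner_Integration.integrable_bound[where f="phiN N"])
  show "integrable lborel (phiN N)" by (rule phiN_int[OF N])
  show "(\<lambda>s. indicator {..<t} s *\<^sub>R (complex_of_real (phiN N s) * WW (t - s) x)) \<in> borel_measurable lborel"
    using WW_meas by measurable
  show "AE s in lborel. norm (indicator {..<t} s *\<^sub>R (complex_of_real (phiN N s) * WW (t - s) x)) \<le> norm (phiN N s)"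
  proof (rule AE_I2)
    fix s
    show "norm (indicator {..<t} s *\<^sub>R (complex_of_real (phiN N s) * WW (t - s) x)) \<le> norm (phiN N s)"
    proof (cases "s < t")
      case True
      have "norm (WW (t - s) x) \<le> 1" using True by (intro WW_bound) simp
      then have "phiN N s * norm (WW (t - s) x) \<le> phiN N s * 1" by (intro mult_left_mono phiN_nonneg)
      then show ?thesis using True phiN_nonneg[of N s] by (simp add: norm_mult)
    qed simp
  qed
qed

lemma set_integral_Im':
  fixes f :: "real \<Rightarrow> complex"
  assumes "set_integrable M A f"
  shows "Im (LINT x:A|M. f x) = (LINT x:A|M. Im (f x))"
  using assms unfolding set_integrable_def set_lebesgue_integral_def
  by (subst integral_Im[symmetric]) auto

lemma log_integral:
  fixes a b t :: real
  assumes "a \<le> b" "b < t"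
  shows "(LINT s:{a..b}|lborel. 1 / (t - s)) = ln (t - a) - ln (t - b)"
proof -
  have "(LBINT s=ereal a..ereal b. 1 / (t - s)) = (- ln (t - b)) - (- ln (t - a))"
  proof (rule interval_integral_FTC_finite)
    show "continuous_on {min a b..max a b} (\<lambda>s. 1 / (t - s))"
      using assms by (intro continuous_intros) auto
    show "((\<lambda>s. - ln (t - s)) has_vector_derivative 1 / (t - s)) (at s within {min a b..max a b})"
      if "min a b \<le> s" "s \<le> max a b" for s
      using that assms by (auto intro!: derivative_eq_intros simp: has_real_derivative_iff_has_vector_derivative[symmetric])
  qed
  then show ?thesis using assms by (simp add: interval_integral_Icc)
qed

lemma duh_lower:
  assumes N: "N \<ge> 3" and t: "0 \<le> t" "t \<le> N" and x: "norm x \<le> 1"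
  shows "norm (duhamel (FN N) t x) \<ge> (exp (- 1/2) / 10) * (ln (t + N) - ln 3) - 3"
proof -
  have N0: "N > 0" using N by simp
  define c :: real where "c = exp (- 1/2) / 10"
  define g where "g s = indicator {-N..t-3} s * (c / (t - s)) - indicator {t-3<..<t} s" for s :: real
  let ?f = "\<lambda>s. complex_of_real (phiN N s) * WW (t - s) x"
  have fi: "set_integrable lborel {..<t} ?f" by (rule duh_integrable[OF N0])
  have "- Im (duhamel (FN N) t x) = - (LINT s:{..<t}|lborel. Im (?f s))"
    unfolding duhamel_formula WW_def[symmetric] using set_integral_Im'[OF fi] by simp
  also have "\<dots> = (LINT s:{..<t}|lborel. phiN N s * (- Im (WW (t - s) x)))"
    unfolding set_lebesgue_integral_def by (simp flip: Bochner_Integration.integral_minus)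
  finally have eq: "- Im (duhamel (FN N) t x) = (LINT s:{..<t}|lborel. phiN N s * (- Im (WW (t - s) x)))" .
  have hi: "set_integrable lborel {..<t} (\<lambda>s. phiN N s * (- Im (WW (t - s) x)))"
  proof -
    have "set_integrable lborel {..<t} (\<lambda>s. - Im (?f s))"
    proof -
      have "integrable lborel (\<lambda>s. - Im (indicator {..<t} s *\<^sub>R ?f s))"
        using fi unfolding set_integrable_def by (intro integrable_minus integrable_Im)
      moreover have "(\<lambda>s. - Im (indicator {..<t} s *\<^sub>R ?f s)) = (\<lambda>s. indicator {..<t} s *\<^sub>R (- Im (?f s)))"
        by (auto simp: fun_eq_iff indicator_def)
      ultimately show ?thesis unfolding set_integrable_def by simp
    qed
    then show ?thesis by simp
  qed
  have gi1: "set_integrable lborel {-N..t-3} (\<lambda>s. c / (t - s))"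
    by (rule borel_integrable_atLeastAtMost') (auto intro!: continuous_intros)
  have gi2: "set_integrable lborel {t-3<..<t} (\<lambda>s. 1::real)"
    by (simp add: set_integrable_def)
  have gi: "set_integrable lborel {..<t} g"
  proof -
    have "integrable lborel (\<lambda>s. indicator {-N..t-3} s * (c / (t - s)) - indicator {t-3<..<t} s * (1::real))"
      using Bochner_Integration.integrable_diff[OF gi1[unfolded set_integrable_def real_scaleR_def] gi2[unfolded set_integrable_def real_scaleR_def]] .
    moreover have "indicator {..<t} s *\<^sub>R g s = indicator {-N..t-3} s * (c / (t - s)) - indicator {t-3<..<t} s * (1::real)" for s
      unfolding g_def by (auto simp: indicator_def)
    ultimately show ?thesis unfolding set_integrable_def by simp
  qed
  have mono: "g s \<le> phiN N s * (- Im (WW (t - s) x))" if s: "s \<in> {..<t}" for s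
  proof (cases "s < -N")
    case True
    then have "t - s \<ge> 3" using t N by simp
    then have "- Im (WW (t - s) x) \<ge> 1 / (10 * (t - s))" using WW_im x by blast
    moreover have "1 / (10 * (t - s)) \<ge> 0" using \<open>t - s \<ge> 3\<close> by simp
    ultimately have "0 \<le> - Im (WW (t - s) x)" by linarith
    then have "phiN N s * (- Im (WW (t - s) x)) \<ge> 0" by (intro mult_nonneg_nonneg phiN_nonneg)
    moreover have "g s = 0" using True t N unfolding g_def by (auto simp: indicator_def)
    ultimately show ?thesis by simp
  next
    case False
    show ?thesis
    proof (cases "s \<le> t - 3")
      case True
      then have ts: "t - s \<ge> 3" by simp
      have "\<bar>s\<bar> \<le> N" using False True t by simp
      then have p: "phiN N s \<ge> exp (- 1/2)" by (rule phiN_lower[OF N0])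
      have i: "- Im (WW (t - s) x) \<ge> 1 / (10 * (t - s))" using WW_im[OF ts x] .
      have "exp (- 1/2) * (1 / (10 * (t - s))) \<le> phiN N s * (- Im (WW (t - s) x))"
        by (rule mult_mono[OF p i]) (use phiN_nonneg ts in auto)
      moreover have "g s = exp (- 1/2) * (1 / (10 * (t - s)))"
        using False True unfolding g_def c_def by (auto simp: indicator_def)
      ultimately show ?thesis by simp
    next
      case False2: False
      then have "t - s > 0" using s by simp
      have "norm (WW (t - s) x) \<le> 1" using \<open>t - s > 0\<close> by (rule WW_bound)
      then have "- Im (WW (t - s) x) \<ge> -1" using abs_Im_le_cmod[of "WW (t - s) x"] by linarith
      then have "phiN N s * (- Im (WW (t - s) x)) \<ge> phiN N s * (-1)" by (intro mult_left_mono phiN_nonneg)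
      then have "phiN N s * (- Im (WW (t - s) x)) \<ge> -1" using phiN_le1[of N s] by linarith
      moreover have "g s = -1" using False2 s unfolding g_def by (auto simp: indicator_def)
      ultimately show ?thesis by simp
    qed
  qed
  have "(LINT s:{..<t}|lborel. g s) \<le> (LINT s:{..<t}|lborel. phiN N s * (- Im (WW (t - s) x)))"
    by (rule set_integral_mono[OF gi hi mono])
  moreover have "(LINT s:{..<t}|lborel. g s) = c * (ln (t + N) - ln 3) - 3"
  proof -
    have "(LINT s:{..<t}|lborel. g s) = (LINT s|lborel. indicator {-N..t-3} s * (c / (t - s)) - indicator {t-3<..<t} s * (1::real))"
      unfolding set_lebesgue_integral_def g_def by (intro Bochner_Integration.integral_cong) (auto simp: indicator_def)
    also have "\<dots> = (LINT s:{-N..t-3}|lborel. c / (t - s)) - (LINT s:{t-3<..<t}|lborel. (1::real))"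
      using gi1 gi2 unfolding set_integrable_def set_lebesgue_integral_def by (subst Bochner_Integration.integral_diff) auto
    also have "(LINT s:{-N..t-3}|lborel. c / (t - s)) = c * (LINT s:{-N..t-3}|lborel. 1 / (t - s))"
      by (simp add: set_integral_mult_right[symmetric])
    also have "(LINT s:{-N..t-3}|lborel. 1 / (t - s)) = ln (t + N) - ln 3"
      using log_integral[of "-N" "t-3" t] t N by simp
    also have "(LINT s:{t-3<..<t}|lborel. (1::real)) = 3"
      by (simp add: set_lebesgue_integral_def)
    finally show ?thesis .
  qed
  ultimately have "c * (ln (t + N) - ln 3) - 3 \<le> - Im (duhamel (FN N) t x)" using eq by simp
  also have "\<dots> \<le> norm (duhamel (FN N) t x)" using abs_Im_le_cmod[of "duhamel (FN N) t x"] by linarith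
  finally show ?thesis unfolding c_def .
qed


lemma gauss2_real:
  "(\<integral>\<^sup>+ y. ennreal (exp (- (norm (y::real^2))\<^sup>2)) \<partial>lborel) = ennreal pi"
proof -
  have i: "integrable lborel (\<lambda>y::real^2. exp (- 1 * (norm y)\<^sup>2))" by (rule integrable_gauss_real) simp
  have "complex_of_real (LINT y|lborel. exp (- (norm (y::real^2))\<^sup>2)) = (LINT y|lborel. exp (- 1 * complex_of_real ((norm (y::real^2))\<^sup>2)))"
    by (simp flip: integral_complex_of_real exp_of_real)
  also have "\<dots> = complex_of_real pi / 1" by (rule gauss2_zero(2)) simp
  finally have "(LINT y|lborel. exp (- (norm (y::real^2))\<^sup>2)) = pi"
    by (metis div_by_1 of_real_eq_iff)
  moreover have "(\<integral>\<^sup>+ y. ennreal (exp (- (norm (y::real^2))\<^sup>2)) \<partial>lborel) = ennreal (LINT y|lborel. exp (- (norm (y::real^2))\<^sup>2))"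
    using i by (intro nn_integral_eq_integral) auto
  ultimately show ?thesis by simp
qed

lemma L1_FN: "L1_norm (FN N s) = ennreal (phiN N s * pi)"
proof -
  have e: "ennreal (cmod (FN N s y)) = ennreal (phiN N s) * ennreal (exp (- (norm y)\<^sup>2))" for y
    unfolding FN_def phiN_def norm_of_real by (simp add: abs_mult ennreal_mult)
  have "L1_norm (FN N s) = (\<integral>\<^sup>+ y. ennreal (phiN N s) * ennreal (exp (- (norm (y::real^2))\<^sup>2)) \<partial>lborel)"
    by (simp only: L1_norm_def e)
  also have "\<dots> = ennreal (phiN N s) * ennreal pi"
    by (subst nn_integral_cmult) (auto simp: gauss2_real)
  finally show ?thesis by (simp add: ennreal_mult phiN_nonneg)
qed

lemma RHS_FN:
  assumes N: "N > 0"
  shows "(\<integral>\<^sup>+ s. (L1_norm (FN N s))\<^sup>2 \<partial>lborel) = ennreal (pi\<^sup>2 * (sqrt pi * N))"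
proof -
  define \<sigma> where "\<sigma> = N / sqrt 2"
  have s0: "\<sigma> > 0" using N by (simp add: \<sigma>_def)
  have s2: "2 * \<sigma>\<^sup>2 = N\<^sup>2" by (simp add: \<sigma>_def power_divide)
  have pt: "(L1_norm (FN N s))\<^sup>2 = ennreal (pi\<^sup>2) * ennreal (exp (- s\<^sup>2 / (2 * \<sigma>\<^sup>2)))" for s
  proof -
    have "(L1_norm (FN N s))\<^sup>2 = ennreal ((phiN N s * pi)\<^sup>2)"
      unfolding L1_FN by (simp add: ennreal_power phiN_nonneg)
    also have "(phiN N s * pi)\<^sup>2 = pi\<^sup>2 * exp (- s\<^sup>2 / (2 * \<sigma>\<^sup>2))"
    proof -
      have "(phiN N s)\<^sup>2 = exp (2 * (- s\<^sup>2 / (2 * N\<^sup>2)))"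
        unfolding phiN_def by (simp add: exp_add[symmetric] power2_eq_square)
      also have "2 * (- s\<^sup>2 / (2 * N\<^sup>2)) = - s\<^sup>2 / (2 * \<sigma>\<^sup>2)" unfolding s2 using N by simp
      finally show ?thesis by (simp add: power_mult_distrib)
    qed
    finally show ?thesis by (simp add: ennreal_mult)
  qed
  have "(\<integral>\<^sup>+ s. (L1_norm (FN N s))\<^sup>2 \<partial>lborel) = ennreal (pi\<^sup>2) * (\<integral>\<^sup>+ s. ennreal (exp (- s\<^sup>2 / (2 * \<sigma>\<^sup>2))) \<partial>lborel)"
    unfolding pt by (subst nn_integral_cmult) auto
  also have "(\<integral>\<^sup>+ s. ennreal (exp (- s\<^sup>2 / (2 * \<sigma>\<^sup>2))) \<partial>lborel) = ennreal (sqrt (2 * pi * \<sigma>\<^sup>2))"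
    using gauss_1d[OF s0] by (subst nn_integral_eq_integral) auto
  also have "sqrt (2 * pi * \<sigma>\<^sup>2) = sqrt pi * N"
  proof -
    have "2 * pi * \<sigma>\<^sup>2 = pi * N\<^sup>2" using s2 by (simp add: algebra_simps)
    then have "sqrt (2 * pi * \<sigma>\<^sup>2) = sqrt (pi * N\<^sup>2)" by (rule arg_cong)
    also have "\<dots> = sqrt pi * N" using N by (simp add: real_sqrt_mult)
    finally show ?thesis .
  qed
  finally show ?thesis using N by (simp add: ennreal_mult')
qed

lemma Linf_lower:
  assumes L: "\<And>x. norm x \<le> 1 \<Longrightarrow> L \<le> norm (g x)"
  shows "ennreal L \<le> Linf_norm g"
proof (cases "(\<lambda>x. ennreal (cmod (g x))) \<in> borel_measurable lborel")
  case False
  then show ?thesis unfolding Linf_norm_def by (simp add: esssup_non_measurable)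
next
  case True
  show ?thesis unfolding Linf_norm_def esssup_eq[OF True]
  proof (rule Inf_greatest)
    fix z assume z: "z \<in> {z. emeasure lborel {x \<in> space lborel. z < ennreal (cmod (g x))} = 0}"
    show "ennreal L \<le> z"
    proof (rule ccontr)
      assume "\<not> ennreal L \<le> z"
      then have zl: "z < ennreal L" by simp
      have "ball 0 1 \<subseteq> {x \<in> space lborel. z < ennreal (cmod (g x))}"
      proof
        fix x :: "real^2" assume "x \<in> ball 0 1"
        then have "norm x \<le> 1" by simp
        then have "ennreal L \<le> ennreal (cmod (g x))" using L by (intro ennreal_leI) auto
        then show "x \<in> {x \<in> space lborel. z < ennreal (cmod (g x))}" using order_less_le_trans[OF zl] by auto
      qed
      then have "emeasure lborel (ball (0::real^2) 1) \<le> emeasure lborel {x \<in> space lborel. z < ennreal (cmod (g x))}"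
        by (intro emeasure_mono) (use True in measurable)
      also have "\<dots> = 0" using z by simp
      finally show False using emeasure_lborel2_ball[of 1 0] by simp
    qed
  qed
qed

lemma LHS_lower:
  assumes N: "N \<ge> 3" and L: "L = (exp (- 1/2) / 10) * (ln N - ln 3) - 3" "L \<ge> 0"
  shows "ennreal (N * L\<^sup>2) \<le> (\<integral>\<^sup>+ t. (Linf_norm (duhamel (FN N) t))\<^sup>2 \<partial>lborel)"
proof -
  have pt: "ennreal (L\<^sup>2) * indicator {0..N} t \<le> (Linf_norm (duhamel (FN N) t))\<^sup>2" for t
  proof (cases "t \<in> {0..N}")
    case True
    have "ennreal L \<le> Linf_norm (duhamel (FN N) t)"
    proof (rule Linf_lower)
      fix x :: "real^2" assume x: "norm x \<le> 1"
      have "ln N \<le> ln (t + N)" using True N by simp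
      then have "L \<le> (exp (- 1/2) / 10) * (ln (t + N) - ln 3) - 3"
        unfolding L(1) by (intro diff_right_mono mult_left_mono) auto
      also have "\<dots> \<le> norm (duhamel (FN N) t x)" using duh_lower[OF N _ _ x] True by simp
      finally show "L \<le> norm (duhamel (FN N) t x)" .
    qed
    then have "(ennreal L)\<^sup>2 \<le> (Linf_norm (duhamel (FN N) t))\<^sup>2" by (intro power_mono) auto
    then show ?thesis using True L(2) by (simp add: ennreal_power)
  qed simp
  have "ennreal (N * L\<^sup>2) = (\<integral>\<^sup>+ t. ennreal (L\<^sup>2) * indicator {0..N} t \<partial>lborel)"
    using N by (subst nn_integral_cmult_indicator) (auto simp: ennreal_mult mult.commute)
  also have "\<dots> \<le> (\<integral>\<^sup>+ t. (Linf_norm (duhamel (FN N) t))\<^sup>2 \<partial>lborel)"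
    by (intro nn_integral_mono pt)
  finally show ?thesis .
qed


lemma one_plus_le_exp':
  fixes c r :: real assumes c: "c > 0"
  shows "1 + r \<le> (2 + 1/(2*c)) * exp (c * r\<^sup>2)"
proof -
  have "r \<le> 1/(2*c) + c * r\<^sup>2 / 2"
  proof -
    have "0 \<le> (c*r - 1)\<^sup>2 / (2*c)" using c by simp
    also have "(c*r - 1)\<^sup>2 / (2*c) = c * r\<^sup>2 / 2 - r + 1/(2*c)"
      using c by (simp add: field_simps power2_eq_square)
    finally show ?thesis by simp
  qed
  also have "1 + (1/(2*c) + c * r\<^sup>2 / 2) \<le> (2 + 1/(2*c)) * (1 + c * r\<^sup>2)"
    using c by (simp add: algebra_simps)
  also have "\<dots> \<le> (2 + 1/(2*c)) * exp (c * r\<^sup>2)"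
    using c by (intro mult_left_mono exp_ge_add_one_self) auto
  finally show ?thesis by simp
qed

lemma one_plus_pow_le_exp':
  fixes c r :: real assumes c: "c > 0" and r: "r \<ge> 0"
  shows "(1 + r)^n \<le> (2 + real n/(2*c))^n * exp (c * r\<^sup>2)"
proof (cases "n = 0")
  case True then show ?thesis using c by simp
next
  case False
  then have n: "real n > 0" by simp
  have "1 + r \<le> (2 + 1/(2*(c/n))) * exp ((c/n) * r\<^sup>2)"
    by (rule one_plus_le_exp') (use c n in simp)
  also have "1/(2*(c/n)) = real n/(2*c)" by simp
  finally have "(1 + r)^n \<le> ((2 + real n/(2*c)) * exp ((c/n) * r\<^sup>2))^n"
    using r by (intro power_mono) auto
  also have "\<dots> = (2 + real n/(2*c))^n * exp (c * r\<^sup>2)"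
    using n by (simp add: power_mult_distrib exp_of_nat_mult[symmetric])
  finally show ?thesis .
qed

inductive PP :: "('a::real_normed_vector \<Rightarrow> complex) \<Rightarrow> bool" where
  PP_const: "PP (\<lambda>z. c)"
| PP_lin: "bounded_linear l \<Longrightarrow> PP (\<lambda>z. complex_of_real (l z))"
| PP_add: "PP p \<Longrightarrow> PP q \<Longrightarrow> PP (\<lambda>z. p z + q z)"
| PP_mul: "PP p \<Longrightarrow> PP q \<Longrightarrow> PP (\<lambda>z. p z * q z)"

lemma PP_deriv: "PP p \<Longrightarrow> \<exists>p'. (\<forall>z. (p has_derivative p' z) (at z)) \<and> (\<forall>h. PP (\<lambda>z. p' z h))"
proof (induction rule: PP.induct)
  case (PP_const c)
  show ?case by (rule exI[where x="\<lambda>z h. 0"]) (auto intro: PP.PP_const)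
next
  case (PP_lin l)
  have "bounded_linear (\<lambda>h. complex_of_real (l h))"
    using bounded_linear_compose[OF bounded_linear_of_real PP_lin] by (simp add: o_def)
  then show ?case
    by (intro exI[where x="\<lambda>z h. complex_of_real (l h)"]) (auto intro: PP.PP_const bounded_linear_imp_has_derivative)
next
  case (PP_add p q)
  from PP_add.IH obtain p' q' where p': "\<forall>z. (p has_derivative p' z) (at z)" "\<forall>h. PP (\<lambda>z. p' z h)"
    and q': "\<forall>z. (q has_derivative q' z) (at z)" "\<forall>h. PP (\<lambda>z. q' z h)" by blast
  show ?case
    by (intro exI[where x="\<lambda>z h. p' z h + q' z h"]) (use p' q' in \<open>auto intro: PP.PP_add has_derivative_add\<close>)
next
  case (PP_mul p q)
  from PP_mul.IH obtain p' q' where p': "\<forall>z. (p has_derivative p' z) (at z)" "\<forall>h. PP (\<lambda>z. p' z h)"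
    and q': "\<forall>z. (q has_derivative q' z) (at z)" "\<forall>h. PP (\<lambda>z. q' z h)" by blast
  show ?case
  proof (intro exI[where x="\<lambda>z h. p z * q' z h + p' z h * q z"] conjI allI)
    fix z show "((\<lambda>z. p z * q z) has_derivative (\<lambda>h. p z * q' z h + p' z h * q z)) (at z)"
      using has_derivative_mult[OF p'(1)[rule_format, of z] q'(1)[rule_format, of z]] .
  next
    fix h
    have a: "PP (\<lambda>z. p z * q' z h)" using PP.PP_mul[OF PP_mul.hyps(1) q'(2)[rule_format, of h]] .
    have b: "PP (\<lambda>z. p' z h * q z)" using PP.PP_mul[OF p'(2)[rule_format, of h] PP_mul.hyps(2)] .
    show "PP (\<lambda>z. p z * q' z h + p' z h * q z)" using PP.PP_add[OF a b] .
  qed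
qed

lemma PP_bound: "PP p \<Longrightarrow> \<exists>K m. K \<ge> 0 \<and> (\<forall>z. norm (p z) \<le> K * (1 + norm z)^m)"
proof (induction p rule: PP.induct)
  case (PP_const c)
  show ?case by (intro exI[where x="norm c"] exI[where x=0]) simp
next
  case (PP_lin l)
  obtain K where K: "K > 0" "\<And>x. norm (l x) \<le> norm x * K" using bounded_linear.pos_bounded[OF PP_lin] by blast
  show ?case
  proof (intro exI[where x=K] exI[where x=1] conjI allI)
    fix z :: 'a
    have "norm (complex_of_real (l z)) = norm (l z)" by simp
    also have "\<dots> \<le> norm z * K" by (rule K(2))
    also have "\<dots> \<le> K * (1 + norm z)^1" using K(1) by (simp add: mult.commute)
    finally show "norm (complex_of_real (l z)) \<le> K * (1 + norm z)^1" .
  qed (use K in simp)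
next
  case (PP_add p q)
  from PP_add.IH obtain K1 m1 K2 m2 where b: "K1 \<ge> 0" "\<forall>z. norm (p z) \<le> K1 * (1 + norm z)^m1"
    "K2 \<ge> 0" "\<forall>z. norm (q z) \<le> K2 * (1 + norm z)^m2" by blast
  show ?case
  proof (intro exI[where x="K1 + K2"] exI[where x="m1 + m2"] conjI allI)
    fix z :: 'a
    have u: "(1 + norm z)^m1 \<le> (1 + norm z)^(m1 + m2)" "(1 + norm z)^m2 \<le> (1 + norm z)^(m1 + m2)"
      by (intro power_increasing; simp)+
    have "norm (p z + q z) \<le> norm (p z) + norm (q z)" by (rule norm_triangle_ineq)
    also have "\<dots> \<le> K1 * (1 + norm z)^m1 + K2 * (1 + norm z)^m2" using b by (intro add_mono) auto
    also have "\<dots> \<le> K1 * (1 + norm z)^(m1 + m2) + K2 * (1 + norm z)^(m1 + m2)"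
      using u b by (intro add_mono mult_left_mono) auto
    finally show "norm (p z + q z) \<le> (K1 + K2) * (1 + norm z)^(m1 + m2)" by (simp add: algebra_simps)
  qed (use b in simp)
next
  case (PP_mul p q)
  from PP_mul.IH obtain K1 m1 K2 m2 where b: "K1 \<ge> 0" "\<forall>z. norm (p z) \<le> K1 * (1 + norm z)^m1"
    "K2 \<ge> 0" "\<forall>z. norm (q z) \<le> K2 * (1 + norm z)^m2" by blast
  show ?case
  proof (intro exI[where x="K1 * K2"] exI[where x="m1 + m2"] conjI allI)
    fix z :: 'a
    have "norm (p z * q z) = norm (p z) * norm (q z)" by (simp add: norm_mult)
    also have "\<dots> \<le> (K1 * (1 + norm z)^m1) * (K2 * (1 + norm z)^m2)"
      using b by (intro mult_mono) auto
    also have "\<dots> = K1 * K2 * (1 + norm z)^(m1 + m2)" by (simp add: power_add algebra_simps)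
    finally show "norm (p z * q z) \<le> K1 * K2 * (1 + norm z)^(m1 + m2)" .
  qed (use b in simp)
qed

lemma schwartz_gauss:
  fixes Q :: "'a::euclidean_space \<Rightarrow> real" and Q' :: "'a \<Rightarrow> 'a \<Rightarrow> real"
  assumes dQ: "\<And>z. (Q has_derivative Q' z) (at z)"
    and linQ: "\<And>h. bounded_linear (\<lambda>z. Q' z h)"
    and c: "c > 0" and Qc: "\<And>z. Q z \<ge> c * (norm z)\<^sup>2"
    and p: "PP p"
  shows "schwartz (\<lambda>z. p z * complex_of_real (exp (- Q z)))"
  using p
proof (coinduction arbitrary: p rule: schwartz.coinduct)
  case (schwartz p)
  obtain p' where p': "\<And>z. (p has_derivative p' z) (at z)" "\<And>h. PP (\<lambda>z. p' z h)"
    using PP_deriv[OF schwartz] by blast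
  obtain K m where Km: "K \<ge> 0" "\<And>z. norm (p z) \<le> K * (1 + norm z)^m"
    using PP_bound[OF schwartz] by blast
  define g' where "g' z h = (p' z h - p z * complex_of_real (Q' z h)) * complex_of_real (exp (- Q z))" for z h
  have dE: "((\<lambda>z. complex_of_real (exp (- Q z))) has_derivative (\<lambda>h. complex_of_real (- Q' z h * exp (- Q z)))) (at z)" for z
    by (rule has_derivative_of_real[OF has_derivative_exp[OF has_derivative_minus[OF dQ]]])
  have dg: "((\<lambda>z. p z * complex_of_real (exp (- Q z))) has_derivative g' z) (at z)" for z
    by (rule has_derivative_eq_rhs[OF has_derivative_mult[OF p'(1) dE]])
       (auto simp: g'_def fun_eq_iff algebra_simps)
  have decay: "\<exists>C. \<forall>z. (1 + norm z) ^ n * cmod (p z * complex_of_real (exp (- Q z))) \<le> C" for n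
  proof (intro exI allI)
    fix z :: 'a
    define B where "B = (2 + real (n + m)/(2*c))^(n + m)"
    have "(1 + norm z) ^ n * cmod (p z * complex_of_real (exp (- Q z))) = (1 + norm z) ^ n * norm (p z) * exp (- Q z)"
      by (simp add: norm_mult)
    also have "\<dots> \<le> (1 + norm z) ^ n * (K * (1 + norm z)^m) * exp (- (c * (norm z)\<^sup>2))"
      using Km Qc[of z] by (intro mult_mono) auto
    also have "\<dots> = K * ((1 + norm z) ^ (n + m) * exp (- (c * (norm z)\<^sup>2)))"
      by (simp add: power_add algebra_simps)
    also have "\<dots> \<le> K * (B * exp (c * (norm z)\<^sup>2) * exp (- (c * (norm z)\<^sup>2)))"
      unfolding B_def using Km(1) c by (intro mult_left_mono mult_right_mono one_plus_pow_le_exp') auto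
    also have "\<dots> = K * B" by (simp add: exp_minus)
    finally show "(1 + norm z) ^ n * cmod (p z * complex_of_real (exp (- Q z))) \<le> K * B" .
  qed
  have basis: "\<exists>p. (\<lambda>z. g' z b) = (\<lambda>z. p z * complex_of_real (exp (- Q z))) \<and> PP p" for b
  proof (intro exI conjI)
    show "PP (\<lambda>z. p' z b + (-1) * (p z * complex_of_real (Q' z b)))"
      by (intro PP.PP_add p'(2) PP.PP_mul PP.PP_const schwartz PP.PP_lin linQ)
    show "(\<lambda>z. g' z b) = (\<lambda>z. (p' z b + (-1) * (p z * complex_of_real (Q' z b))) * complex_of_real (exp (- Q z)))"
      by (simp add: g'_def fun_eq_iff algebra_simps)
  qed
  show ?case
    by (intro exI[where x="\<lambda>z. p z * complex_of_real (exp (- Q z))"] exI[where x=g'] conjI refl allI impI disjI1 dg decay basis)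
qed

lemma schwartz_FN_aux:
  fixes N :: real assumes N: "N > 0"
  shows "schwartz (\<lambda>z::real \<times> (real^2). complex_of_real (exp (- (fst z)\<^sup>2 / (2 * N\<^sup>2)) * exp (- (norm (snd z))\<^sup>2)))"
proof -
  define a where "a = 1 / (2 * N\<^sup>2)"
  have a0: "a > 0" using N by (simp add: a_def)
  define Q where "Q z = a * (fst z * fst z) + snd z \<bullet> snd z" for z :: "real \<times> (real^2)"
  define Q' where "Q' z h = a * (fst h * fst z + fst z * fst h) + (snd h \<bullet> snd z + snd z \<bullet> snd h)" for z h :: "real \<times> (real^2)"
  have dQ: "(Q has_derivative Q' z) (at z)" for z
    unfolding Q_def[abs_def] Q'_def by (auto intro!: derivative_eq_intros)
  have linQ: "bounded_linear (\<lambda>z. Q' z h)" for h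
    unfolding linear_conv_bounded_linear[symmetric] Q'_def
    by (rule linearI) (auto simp: algebra_simps inner_add_left inner_add_right)
  define c where "c = min a 1"
  have c0: "c > 0" using a0 by (simp add: c_def)
  have Qc: "Q z \<ge> c * (norm z)\<^sup>2" for z
  proof -
    obtain s x where z: "z = (s, x)" by (cases z)
    have "(norm z)\<^sup>2 = s\<^sup>2 + (norm x)\<^sup>2" unfolding z norm_Pair by simp
    then have "c * (norm z)\<^sup>2 = c * s\<^sup>2 + c * (norm x)\<^sup>2" by (simp add: algebra_simps)
    also have "\<dots> \<le> a * s\<^sup>2 + 1 * (norm x)\<^sup>2"
      unfolding c_def by (intro add_mono mult_right_mono) auto
    also have "\<dots> = Q z"
    proof -
      have "norm x * norm x = x \<bullet> x" by (metis power2_eq_square power2_norm_eq_inner)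
      then show ?thesis unfolding Q_def z by (simp add: power2_eq_square)
    qed
    finally show ?thesis .
  qed
  have "schwartz (\<lambda>z. (\<lambda>z. 1) z * complex_of_real (exp (- Q z)))"
    by (rule schwartz_gauss[OF dQ linQ c0 Qc PP_const])
  moreover have "(\<lambda>z. (\<lambda>z. 1) z * complex_of_real (exp (- Q z))) =
     (\<lambda>z::real \<times> (real^2). complex_of_real (exp (- (fst z)\<^sup>2 / (2 * N\<^sup>2)) * exp (- (norm (snd z))\<^sup>2)))"
  proof -
    have nn: "b \<bullet> b = norm b * norm b" for b :: "real^2" by (metis power2_eq_square power2_norm_eq_inner)
    show ?thesis by (auto simp: fun_eq_iff Q_def a_def exp_add[symmetric] power2_eq_square nn)
  qed
  ultimately show ?thesis by simp
qed


lemma FN_schwartz: "N > 0 \<Longrightarrow> schwartz (\<lambda>z::real \<times> (real^2). FN N (fst z) (snd z))"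
  unfolding FN_def by (rule schwartz_FN_aux)

theorem mainTheorem3:
  shows "\<not> (\<exists>C::real. \<forall>F :: real \<Rightarrow> real^2 \<Rightarrow> complex.
            schwartz (\<lambda>z::real \<times> (real^2). F (fst z) (snd z)) \<and>
            (\<forall>s x y. norm x = norm y \<longrightarrow> F s x = F s y) \<longrightarrow>
            (\<integral>\<^sup>+ t. (Linf_norm (duhamel F t))\<^sup>2 \<partial>lborel)
              \<le> ennreal C * (\<integral>\<^sup>+ s. (L1_norm (F s))\<^sup>2 \<partial>lborel))"
proof
  assume "\<exists>C::real. \<forall>F :: real \<Rightarrow> real^2 \<Rightarrow> complex.
            schwartz (\<lambda>z::real \<times> (real^2). F (fst z) (snd z)) \<and>
            (\<forall>s x y. norm x = norm y \<longrightarrow> F s x = F s y) \<longrightarrow>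
            (\<integral>\<^sup>+ t. (Linf_norm (duhamel F t))\<^sup>2 \<partial>lborel)
              \<le> ennreal C * (\<integral>\<^sup>+ s. (L1_norm (F s))\<^sup>2 \<partial>lborel)"
  then obtain C :: real where C: "\<And>F :: real \<Rightarrow> real^2 \<Rightarrow> complex.
            schwartz (\<lambda>z::real \<times> (real^2). F (fst z) (snd z)) \<Longrightarrow>
            (\<forall>s x y. norm x = norm y \<longrightarrow> F s x = F s y) \<Longrightarrow>
            (\<integral>\<^sup>+ t. (Linf_norm (duhamel F t))\<^sup>2 \<partial>lborel)
              \<le> ennreal C * (\<integral>\<^sup>+ s. (L1_norm (F s))\<^sup>2 \<partial>lborel)" by blast
  define c :: real where "c = exp (- 1/2) / 10"
  have c0: "c > 0" by (simp add: c_def)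
  define K :: real where "K = max C 0 * (pi\<^sup>2 * sqrt pi)"
  have K0: "K \<ge> 0" by (simp add: K_def)
  define M :: real where "M = (4 + sqrt K) / c"
  have M0: "M > 0" unfolding M_def using c0 K0 by (intro divide_pos_pos) (auto intro: add_pos_nonneg)
  define N :: real where "N = 3 * exp M"
  have N3: "N \<ge> 3" using M0 by (simp add: N_def)
  then have N0: "N > 0" by simp
  define L :: real where "L = c * (ln N - ln 3) - 3"
  have LM: "ln N - ln 3 = M" by (simp add: N_def ln_mult)
  have L1: "L = 1 + sqrt K" unfolding L_def LM M_def using c0 by simp
  have L0: "L \<ge> 0" using L1 K0 by simp
  have LK: "L\<^sup>2 > K"
  proof -
    have "L\<^sup>2 = 1 + 2 * sqrt K + K" unfolding L1 using K0 by (simp add: power2_eq_square algebra_simps)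
    moreover have "sqrt K \<ge> 0" using K0 by simp
    ultimately show ?thesis by linarith
  qed
  have rad: "\<forall>s x y. norm x = norm y \<longrightarrow> FN N s x = FN N s y" by (simp add: FN_def)
  have "ennreal (N * L\<^sup>2) \<le> (\<integral>\<^sup>+ t. (Linf_norm (duhamel (FN N) t))\<^sup>2 \<partial>lborel)"
    by (rule LHS_lower[OF N3 _ L0]) (simp add: L_def c_def)
  also have "\<dots> \<le> ennreal C * (\<integral>\<^sup>+ s. (L1_norm (FN N s))\<^sup>2 \<partial>lborel)"
    by (rule C[OF FN_schwartz[OF N0] rad])
  also have "\<dots> = ennreal C * ennreal (pi\<^sup>2 * (sqrt pi * N))" by (simp add: RHS_FN[OF N0])
  also have "\<dots> = ennreal (N * K)"
  proof (cases "C \<ge> 0")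
    case True
    then show ?thesis unfolding K_def by (simp add: ennreal_mult'[symmetric] max_def mult_ac)
  next
    case False
    then show ?thesis unfolding K_def by (simp add: ennreal_neg max_def)
  qed
  finally have "N * L\<^sup>2 \<le> N * K" using N0 K0 by (simp add: ennreal_le_iff)
  then have "L\<^sup>2 \<le> K" using N0 by simp
  then show False using LK by simp
qed

end
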